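(* Let $\Phi$ be a real, additive gain graph on $n$ vertices and let $d\leq n$. For generic $\mathbf{Q}\in(\mathbb{E}^d)^n$ (i.e. for all $\mathbf{Q}$ in an open dense subset), the arrangement $\mathcal{H}=\mathcal{H}(\Phi;\mathbf{Q})$ has characteristic polynomial $p_{\mathcal{H}}(\lambda)$ equal to the polynomial part of $\chi^b_\Phi(\lambda)/\lambda^{n-d}$, and Whitney-number polynomial $w_{\mathcal{H}}(x,\lambda)$ equal to the polynomial part (in $\lambda$) of $w^b_\Phi(x,\lambda)/\lambda^{n-d}$.
   Context: A real, additive gain graph $\Phi$ on $V=\{1,\dots,n\}$: finite graph with edge set $E$ (multiple edges allowed, every edge with two distinct endpoints) and gains $\phi(e;i,j)\in\mathbb{R}$ with $\phi(e;j,i)=-\phi(e;i,j)$. $S\subseteq E$ is balanced if every circle in $S$ has gain sum $0$; $c(S)$ counts components of $(V,S)$, isolated vertices included. With $\psi_{ij}(P)=d(P,Q_i)^2-d(P,Q_j)^2$, $\mathcal{H}(\Phi;\mathbf{Q})$ consists of hyperplanes $h(e)=\{P:\psi_{ij}(P)=\phi(e;i,j)\}$, one per edge $e$ with endpoints $i,j$. $\mathcal{L}(\mathcal{H})$ is the poset of nonempty intersections of subsets of $\mathcal{H}$ (including $\mathbb{E}^d$) under reverse inclusion, ranked by codimension. A balanced flat is a balanced $S\subseteq E$ such that every $e\notin S$ with both endpoints in one component of $(V,S)$ makes $S\cup\{e\}$ unbalanced; rank $n-c(S)$; $\mathrm{Lat}^b\Phi$ is the poset of balanced flats under inclusion. For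 a ranked poset $P$ with least element $\hat0$ and Möbius function $\mu$: $w_{ij}(P)=\sum\{\mu(x,y):\mathrm{rk}\,x=i,\mathrm{rk}\,y=j\}$, $w_j=w_{0j}$, and $w_j=w_{ij}=0$ when $j$ exceeds the maximum rank. For an arrangement $\mathcal{H}$ in $\mathbb{E}^d$: $p_{\mathcal{H}}(\lambda)=\sum_{j=0}^dw_j(\mathcal{L}(\mathcal{H}))\lambda^{d-j}$ and $w_{\mathcal{H}}(x,\lambda)=\sum_{0\leq i\leq j\leq d}w_{ij}(\mathcal{L}(\mathcal{H}))x^i\lambda^{d-j}$. For $\Phi$: $\chi^b_\Phi(\lambda)=\sum_{j=0}^nw_j(\mathrm{Lat}^b\Phi)\lambda^{n-j}$ and $w^b_\Phi(x,\lambda)=\sum_{0\leq i\leq j\leq n}w_{ij}(\mathrm{Lat}^b\Phi)x^i\lambda^{n-j}$. The polynomial part of a Laurent polynomial in $\lambda$ is the sum of its terms with nonnegative powers of $\lambda$. *)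

theory Defs
  imports "HOL-Analysis.Analysis" "HOL-Computational_Algebra.Polynomial"
begin

text \<open>A real additive gain graph: vertex set = the finite type 'v (n = CARD('v)),
  edge set E (finite), each edge e has an orientation ends e = (i,j) with i \<noteq> j,
  and gain g e = phi(e;i,j).\<close>

definition gphi :: "('e \<Rightarrow> 'v \<times> 'v) \<Rightarrow> ('e \<Rightarrow> real) \<Rightarrow> 'e \<Rightarrow> 'v \<Rightarrow> 'v \<Rightarrow> real" where
  "gphi ends g e a b = (if ends e = (a, b) then g e else - g e)"

definition joins :: "('e \<Rightarrow> 'v \<times> 'v) \<Rightarrow> 'e \<Rightarrow> 'v \<Rightarrow> 'v \<Rightarrow> bool" where
  "joins ends e a b \<longleftrightarrow> ends e = (a, b) \<or> ends e = (b, a)"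

definition is_circle :: "('e \<Rightarrow> 'v \<times> 'v) \<Rightarrow> 'e set \<Rightarrow> 'v list \<Rightarrow> 'e list \<Rightarrow> bool" where
  "is_circle ends S vs es \<longleftrightarrow> length es = length vs \<and> 2 \<le> length vs \<and> distinct vs \<and>
     distinct es \<and> set es \<subseteq> S \<and>
     (\<forall>t < length vs. joins ends (es ! t) (vs ! t) (vs ! ((t + 1) mod length vs)))"

definition circle_gain :: "('e \<Rightarrow> 'v \<times> 'v) \<Rightarrow> ('e \<Rightarrow> real) \<Rightarrow> 'v list \<Rightarrow> 'e list \<Rightarrow> real" where
  "circle_gain ends g vs es =
     (\<Sum>t < length vs. gphi ends g (es ! t) (vs ! t) (vs ! ((t + 1) mod length vs)))"

definition balanced :: "('e \<Rightarrow> 'v \<times> 'v) \<Rightarrow> ('e \<Rightarrow> real) \<Rightarrow> 'e set \<Rightarrow> bool" where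
  "balanced ends g S \<longleftrightarrow> (\<forall>vs es. is_circle ends S vs es \<longrightarrow> circle_gain ends g vs es = 0)"

definition adj :: "('e \<Rightarrow> 'v \<times> 'v) \<Rightarrow> 'e set \<Rightarrow> ('v \<times> 'v) set" where
  "adj ends S = {(a, b). \<exists>e\<in>S. joins ends e a b}"

text \<open>Number of connected components of (V,S), isolated vertices included.\<close>
definition ncomp :: "('e \<Rightarrow> 'v::finite \<times> 'v) \<Rightarrow> 'e set \<Rightarrow> nat" where
  "ncomp ends S = card (UNIV // ((adj ends S)\<^sup>*))"

definition balanced_flat :: "'e set \<Rightarrow> ('e \<Rightarrow> 'v \<times> 'v) \<Rightarrow> ('e \<Rightarrow> real) \<Rightarrow> 'e set \<Rightarrow> bool" where
  "balanced_flat E ends g S \<longleftrightarrow> S \<subseteq> E \<and> balanced ends g S \<and>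
     (\<forall>e \<in> E - S. ends e \<in> (adj ends S)\<^sup>* \<longrightarrow> \<not> balanced ends g (insert e S))"

definition latb :: "'e set \<Rightarrow> ('e \<Rightarrow> 'v \<times> 'v) \<Rightarrow> ('e \<Rightarrow> real) \<Rightarrow> 'e set set" where
  "latb E ends g = {S. balanced_flat E ends g S}"

definition latb_rank :: "('e \<Rightarrow> 'v::finite \<times> 'v) \<Rightarrow> 'e set \<Rightarrow> nat" where
  "latb_rank ends S = CARD('v) - ncomp ends S"

text \<open>Standard recursion mu(x,x)=1, mu(x,y) = - sum_{x \<le> z < y} mu(x,z) for x<y, 0 otherwise,
  computed with a fuel parameter; fuel card P suffices for a finite poset P.\<close>
fun mob_aux :: "'a set \<Rightarrow> ('a \<Rightarrow> 'a \<Rightarrow> bool) \<Rightarrow> nat \<Rightarrow> 'a \<Rightarrow> 'a \<Rightarrow> int" where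
  "mob_aux P le 0 x y = 0"
| "mob_aux P le (Suc k) x y =
     (if x = y then 1
      else if le x y then - (\<Sum>z \<in> {z \<in> P. le x z \<and> le z y \<and> z \<noteq> y}. mob_aux P le k x z)
      else 0)"

definition mobius :: "'a set \<Rightarrow> ('a \<Rightarrow> 'a \<Rightarrow> bool) \<Rightarrow> 'a \<Rightarrow> 'a \<Rightarrow> int" where
  "mobius P le x y = mob_aux P le (card P) x y"

definition whitney :: "'a set \<Rightarrow> ('a \<Rightarrow> 'a \<Rightarrow> bool) \<Rightarrow> ('a \<Rightarrow> nat) \<Rightarrow> nat \<Rightarrow> nat \<Rightarrow> int" where
  "whitney P le rk i j = (\<Sum>(x, y) \<in> {(x, y). x \<in> P \<and> y \<in> P \<and> rk x = i \<and> rk y = j}. mobius P le x y)"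

definition char_poly_of :: "'a set \<Rightarrow> ('a \<Rightarrow> 'a \<Rightarrow> bool) \<Rightarrow> ('a \<Rightarrow> nat) \<Rightarrow> nat \<Rightarrow> int poly" where
  "char_poly_of P le rk D = (\<Sum>j \<le> D. monom (whitney P le rk 0 j) (D - j))"

text \<open>sum_{0 \<le> i \<le> j \<le> D} w_ij x^i lambda^(D-j), as a polynomial in lambda (outer)
  whose coefficients are polynomials in x (inner).\<close>
definition whitney_poly_of :: "'a set \<Rightarrow> ('a \<Rightarrow> 'a \<Rightarrow> bool) \<Rightarrow> ('a \<Rightarrow> nat) \<Rightarrow> nat \<Rightarrow> int poly poly" where
  "whitney_poly_of P le rk D =
     (\<Sum>j \<le> D. \<Sum>i \<le> j. monom (monom (whitney P le rk i j) i) (D - j))"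

text \<open>Polynomial part (in lambda) of p(lambda) / lambda^k.\<close>
definition poly_part_div :: "nat \<Rightarrow> 'a::zero poly \<Rightarrow> 'a poly" where
  "poly_part_div k p = poly_shift k p"

definition gg_char_poly :: "'e set \<Rightarrow> ('e \<Rightarrow> 'v::finite \<times> 'v) \<Rightarrow> ('e \<Rightarrow> real) \<Rightarrow> int poly" where
  "gg_char_poly E ends g = char_poly_of (latb E ends g) (\<subseteq>) (latb_rank ends) CARD('v)"

definition gg_whitney_poly :: "'e set \<Rightarrow> ('e \<Rightarrow> 'v::finite \<times> 'v) \<Rightarrow> ('e \<Rightarrow> real) \<Rightarrow> int poly poly" where
  "gg_whitney_poly E ends g = whitney_poly_of (latb E ends g) (\<subseteq>) (latb_rank ends) CARD('v)"

definition hyp :: "('e \<Rightarrow> 'v::finite \<times> 'v) \<Rightarrow> ('e \<Rightarrow> real) \<Rightarrow> (real^'d)^'v \<Rightarrow> 'e \<Rightarrow> (real^'d) set" where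
  "hyp ends g Q e = {P. (dist P (Q $ fst (ends e)))\<^sup>2 - (dist P (Q $ snd (ends e)))\<^sup>2 = g e}"

text \<open>Intersection poset: nonempty intersections of subsets of H (empty intersection = E^d).\<close>
definition arr_lattice :: "'e set \<Rightarrow> ('e \<Rightarrow> 'v::finite \<times> 'v) \<Rightarrow> ('e \<Rightarrow> real) \<Rightarrow> (real^'d)^'v \<Rightarrow> (real^'d) set set" where
  "arr_lattice E ends g Q = {X. X \<noteq> {} \<and> (\<exists>T \<subseteq> E. X = \<Inter> (hyp ends g Q ` T))}"

definition revincl :: "'a set \<Rightarrow> 'a set \<Rightarrow> bool" where
  "revincl X Y \<longleftrightarrow> Y \<subseteq> X"

definition codim :: "(real^'d) set \<Rightarrow> nat" where
  "codim X = nat (int CARD('d) - aff_dim X)"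

definition arr_char_poly :: "'e set \<Rightarrow> ('e \<Rightarrow> 'v::finite \<times> 'v) \<Rightarrow> ('e \<Rightarrow> real) \<Rightarrow> (real^'d)^'v \<Rightarrow> int poly" where
  "arr_char_poly E ends g Q = char_poly_of (arr_lattice E ends g Q) revincl codim CARD('d)"

definition arr_whitney_poly :: "'e set \<Rightarrow> ('e \<Rightarrow> 'v::finite \<times> 'v) \<Rightarrow> ('e \<Rightarrow> real) \<Rightarrow> (real^'d)^'v \<Rightarrow> int poly poly" where
  "arr_whitney_poly E ends g Q = whitney_poly_of (arr_lattice E ends g Q) revincl codim CARD('d)"

end

theory Submission
  imports Defs
begin


definition porder :: "'a set \<Rightarrow> ('a \<Rightarrow> 'a \<Rightarrow> bool) \<Rightarrow> bool" where
 "porder P le \<longleftrightarrow> (\<forall>x\<in>P. le x x) \<and> (\<forall>x\<in>P. \<forall>y\<in>P. le x y \<longrightarrow> le y x \<longrightarrow> x = y)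
    \<and> (\<forall>x\<in>P. \<forall>y\<in>P. \<forall>z\<in>P. le x y \<longrightarrow> le y z \<longrightarrow> le x z)"

definition ivl :: "'a set \<Rightarrow> ('a \<Rightarrow> 'a \<Rightarrow> bool) \<Rightarrow> 'a \<Rightarrow> 'a \<Rightarrow> 'a set" where
 "ivl P le x z = {w\<in>P. le x w \<and> le w z}"

lemma porder_refl: "porder P le \<Longrightarrow> x \<in> P \<Longrightarrow> le x x"
  unfolding porder_def by blast
lemma porder_antisym: "porder P le \<Longrightarrow> x \<in> P \<Longrightarrow> y \<in> P \<Longrightarrow> le x y \<Longrightarrow> le y x \<Longrightarrow> x = y"
  unfolding porder_def by blast
lemma porder_trans: "porder P le \<Longrightarrow> x \<in> P \<Longrightarrow> y \<in> P \<Longrightarrow> z \<in> P \<Longrightarrow> le x y \<Longrightarrow> le y z \<Longrightarrow> le x z"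
  unfolding porder_def by blast
lemma ivl_self: "porder P le \<Longrightarrow> x \<in> P \<Longrightarrow> z \<in> P \<Longrightarrow> le x z \<Longrightarrow> z \<in> ivl P le x z \<and> x \<in> ivl P le x z"
  unfolding ivl_def using porder_refl by fastforce

lemma ivl_sub:
  assumes "porder P le" "x \<in> P" "z \<in> P" "w \<in> P" "le w z" "w \<noteq> z"
  shows "ivl P le x w \<subseteq> ivl P le x z - {z}"
proof
  fix u assume "u \<in> ivl P le x w"
  then have u: "u \<in> P" "le x u" "le u w" unfolding ivl_def by auto
  have "le u z" using porder_trans[OF assms(1) u(1) assms(4,3) u(3) assms(5)] .
  moreover have "u \<noteq> z" using porder_antisym[OF assms(1) assms(4,3) assms(5)] u assms(6) by blast
  ultimately show "u \<in> ivl P le x z - {z}" using u unfolding ivl_def by auto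
qed

lemma card_less_sub:
  assumes "finite B" "A \<subseteq> B - {z}" "z \<in> B"
  shows "card A < card B"
proof -
  have "card A \<le> card (B - {z})" using assms by (intro card_mono) auto
  also have "\<dots> < card B" using assms by (intro card_Diff1_less)
  finally show ?thesis .
qed

lemma mob_aux_fuel:
  assumes fin: "finite P" and po: "porder P le" and x: "x \<in> P"
  shows "z \<in> P \<Longrightarrow> card (ivl P le x z) \<le> k \<Longrightarrow> card (ivl P le x z) \<le> k'
     \<Longrightarrow> mob_aux P le k x z = mob_aux P le k' x z"
proof (induction k arbitrary: k' z)
  case 0
  have fi: "finite (ivl P le x z)" using fin unfolding ivl_def by auto
  then have "ivl P le x z = {}" using 0 by simp
  hence nl: "\<not> le x z" using ivl_self[OF po x 0(1)] by blast
  hence "x \<noteq> z" using porder_refl[OF po x] by blast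
  then show ?case using nl by (cases k') simp_all
next
  case (Suc k)
  have fi: "finite (ivl P le x z)" using fin unfolding ivl_def by auto
  show ?case
  proof (cases "le x z")
    case True
    hence "x \<in> ivl P le x z" using ivl_self[OF po x Suc.prems(1)] by blast
    hence "card (ivl P le x z) \<noteq> 0" using fi by auto
    then obtain m where m: "k' = Suc m" using Suc.prems(3) by (cases k') simp_all
    have eqs: "mob_aux P le k x w = mob_aux P le m x w" if w: "w \<in> {w\<in>P. le x w \<and> le w z \<and> w \<noteq> z}" for w
    proof -
      have "ivl P le x w \<subseteq> ivl P le x z - {z}" using ivl_sub[OF po x Suc.prems(1)] w by blast
      moreover have "z \<in> ivl P le x z" using ivl_self[OF po x Suc.prems(1) True] by blast
      ultimately have "card (ivl P le x w) < card (ivl P le x z)"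
        by (rule card_less_sub[OF fi])
      then have "card (ivl P le x w) \<le> k" "card (ivl P le x w) \<le> m" using Suc.prems m by simp_all
      then show ?thesis using Suc.IH[of w m] w by blast
    qed
    show ?thesis
    proof (cases "x = z")
      case True then show ?thesis unfolding m by simp
    next
      case False
      have "(\<Sum>w\<in>{w\<in>P. le x w \<and> le w z \<and> w \<noteq> z}. mob_aux P le k x w)
          = (\<Sum>w\<in>{w\<in>P. le x w \<and> le w z \<and> w \<noteq> z}. mob_aux P le m x w)"
        by (rule sum.cong) (rule refl, rule eqs)
      then show ?thesis unfolding m using False True by (simp del: mob_aux.simps add: mob_aux.simps(2))
    qed
  next
    case False
    then have "x \<noteq> z" using porder_refl[OF po x] by auto
    with False show ?thesis by (cases k') simp_all
  qed
qed

lemma mobius_rec: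
  assumes fin: "finite P" and po: "porder P le" and x: "x \<in> P" and y: "y \<in> P"
  shows "mobius P le x y = (if x = y then 1 else if le x y then
     - (\<Sum>z\<in>{z\<in>P. le x z \<and> le z y \<and> z \<noteq> y}. mobius P le x z) else 0)"
proof -
  obtain m where m: "card P = Suc m" using x fin by (cases "card P") auto
  have fi: "finite (ivl P le x w)" for w using fin unfolding ivl_def by auto
  have cP: "card (ivl P le x w) \<le> card P" for w using fin unfolding ivl_def by (auto intro: card_mono)
  have "mob_aux P le m x w = mob_aux P le (Suc m) x w" if w: "w \<in> {z\<in>P. le x z \<and> le z y \<and> z \<noteq> y}" for w
  proof -
    have "ivl P le x w \<subseteq> P - {y}" using ivl_sub[OF po x y, of w] w unfolding ivl_def by auto
    hence "card (ivl P le x w) \<le> card (P - {y})" using fin by (auto intro: card_mono)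
    also have "\<dots> = m" using m y fin by auto
    finally show ?thesis using mob_aux_fuel[OF fin po x, of w m "Suc m"] w by auto
  qed
  then show ?thesis unfolding mobius_def m by (auto intro!: sum.cong)
qed

lemma mobius_iso:
  assumes fin1: "finite P1" and po1: "porder P1 le1" and fin2: "finite P2" and po2: "porder P2 le2"
    and D: "D \<subseteq> P1" and down0: "\<forall>y\<in>D. \<forall>x\<in>P1. le1 x y \<longrightarrow> x \<in> D"
    and bij: "bij_betw \<Phi> D P2"
    and ord0: "\<forall>a\<in>D. \<forall>b\<in>D. le2 (\<Phi> a) (\<Phi> b) \<longleftrightarrow> le1 a b"
    and x: "x \<in> D" and y0: "y0 \<in> D"
  shows "mobius P1 le1 x y0 = mobius P2 le2 (\<Phi> x) (\<Phi> y0)"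
proof -
  have down: "\<And>x y. y \<in> D \<Longrightarrow> x \<in> P1 \<Longrightarrow> le1 x y \<Longrightarrow> x \<in> D" using down0 by blast
  have ord: "\<And>a b. a \<in> D \<Longrightarrow> b \<in> D \<Longrightarrow> le2 (\<Phi> a) (\<Phi> b) \<longleftrightarrow> le1 a b" using ord0 by blast
  have "\<forall>y. card (ivl P1 le1 x y) = N \<longrightarrow> y \<in> D \<longrightarrow> mobius P1 le1 x y = mobius P2 le2 (\<Phi> x) (\<Phi> y)" for N
  proof (induction N rule: less_induct)
    case (less N)
    show ?case
    proof (intro allI impI)
    fix y assume cN: "card (ivl P1 le1 x y) = N" and yD: "y \<in> D"
    have xP: "x \<in> P1" "y \<in> P1" using subsetD[OF D x] subsetD[OF D yD] by simp_all
    have PD: "\<Phi> ` D = P2" using bij by (simp add: bij_betw_def)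
    have fx: "\<Phi> x \<in> P2" "\<Phi> y \<in> P2" using imageI[OF x, of \<Phi>] imageI[OF yD, of \<Phi>] PD by simp_all
    have inj: "inj_on \<Phi> D" using bij by (simp add: bij_betw_def)
    have eq: "\<Phi> x = \<Phi> y \<longleftrightarrow> x = y" using inj_on_eq_iff[OF inj x yD] .
    let ?Z1 = "{z\<in>P1. le1 x z \<and> le1 z y \<and> z \<noteq> y}"
    let ?Z2 = "{z\<in>P2. le2 (\<Phi> x) z \<and> le2 z (\<Phi> y) \<and> z \<noteq> \<Phi> y}"
    have Z1D: "?Z1 \<subseteq> D"
    proof
      fix w assume "w \<in> ?Z1"
      then show "w \<in> D" using down[OF yD, of w] by simp
    qed
    have img: "\<Phi> ` ?Z1 = ?Z2"
    proof
      show "\<Phi> ` ?Z1 \<subseteq> ?Z2"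
      proof
        fix z assume "z \<in> \<Phi> ` ?Z1"
        then obtain w where w: "w \<in> ?Z1" "z = \<Phi> w" by blast
        have wD: "w \<in> D" using subsetD[OF Z1D w(1)] .
        have "\<Phi> w \<in> P2" using imageI[OF wD, of \<Phi>] PD by simp
        moreover have "le2 (\<Phi> x) (\<Phi> w)" using ord[OF x wD] w(1) by simp
        moreover have "le2 (\<Phi> w) (\<Phi> y)" using ord[OF wD yD] w(1) by simp
        moreover have "\<Phi> w \<noteq> \<Phi> y" using inj_on_eq_iff[OF inj wD yD] w(1) by simp
        ultimately show "z \<in> ?Z2" using w(2) by simp
      qed
    next
      show "?Z2 \<subseteq> \<Phi> ` ?Z1"
      proof
        fix z assume z: "z \<in> ?Z2"
        then have "z \<in> \<Phi> ` D" using PD by simp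
        then obtain w where w: "w \<in> D" "z = \<Phi> w" by (rule imageE) simp
        have "w \<in> P1" using subsetD[OF D w(1)] .
        moreover have "le1 x w" using ord[OF x w(1)] z unfolding w(2) by simp
        moreover have "le1 w y" using ord[OF w(1) yD] z unfolding w(2) by simp
        moreover have "w \<noteq> y" using z unfolding w(2) by auto
        ultimately show "z \<in> \<Phi> ` ?Z1" unfolding w(2) by blast
      qed
    qed
    have rec: "mobius P1 le1 x w = mobius P2 le2 (\<Phi> x) (\<Phi> w)" if w: "w \<in> ?Z1" for w
    proof -
      have "card (ivl P1 le1 x w) < card (ivl P1 le1 x y)"
      proof -
        have s: "ivl P1 le1 x w \<subseteq> ivl P1 le1 x y - {y}" using ivl_sub[OF po1 xP] w by auto
        have "le1 x y" using w porder_trans[OF po1 xP(1) _ xP(2), of w] by simp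
        then have yi: "y \<in> ivl P1 le1 x y" using ivl_self[OF po1 xP] by simp
        have "finite (ivl P1 le1 x y)" using fin1 unfolding ivl_def by auto
        then show ?thesis using card_less_sub s yi by metis
      qed
      then have "card (ivl P1 le1 x w) < N" using cN by simp
      moreover have "w \<in> D" using w Z1D by (simp add: subsetD)
      ultimately show ?thesis using spec[OF less.IH[OF \<open>card (ivl P1 le1 x w) < N\<close>], of w] by simp
    qed
    have "(\<Sum>z\<in>?Z1. mobius P1 le1 x z) = (\<Sum>z\<in>?Z1. mobius P2 le2 (\<Phi> x) (\<Phi> z))"
      using rec by (auto intro!: sum.cong)
    also have "\<dots> = (\<Sum>z\<in>?Z2. mobius P2 le2 (\<Phi> x) z)"
      using sum.reindex[of \<Phi> ?Z1 "mobius P2 le2 (\<Phi> x)"] img inj_on_subset[OF inj Z1D] by simp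
    finally show "mobius P1 le1 x y = mobius P2 le2 (\<Phi> x) (\<Phi> y)"
      using mobius_rec[OF fin1 po1 xP] mobius_rec[OF fin2 po2 fx] eq ord[OF x yD] by simp
    qed
  qed
  then show ?thesis using y0 by blast
qed

lemma whitney_iso:
  assumes fin1: "finite P1" and po1: "porder P1 le1" and fin2: "finite P2" and po2: "porder P2 le2"
    and D: "D = {x\<in>P1. rk1 x \<le> d}" and down0: "\<forall>y\<in>D. \<forall>x\<in>P1. le1 x y \<longrightarrow> x \<in> D"
    and bij: "bij_betw \<Phi> D P2"
    and ord0: "\<forall>a\<in>D. \<forall>b\<in>D. le2 (\<Phi> a) (\<Phi> b) \<longleftrightarrow> le1 a b"
    and rk: "\<And>a. a \<in> D \<Longrightarrow> rk2 (\<Phi> a) = rk1 a"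
    and ij: "i \<le> d" "j \<le> d"
  shows "whitney P1 le1 rk1 i j = whitney P2 le2 rk2 i j"
proof -
  let ?A1 = "{(x, y). x \<in> P1 \<and> y \<in> P1 \<and> rk1 x = i \<and> rk1 y = j}"
  let ?A2 = "{(x, y). x \<in> P2 \<and> y \<in> P2 \<and> rk2 x = i \<and> rk2 y = j}"
  let ?f = "\<lambda>p. (\<Phi> (fst p), \<Phi> (snd p))"
  have DP: "D \<subseteq> P1" unfolding D by blast
  have A1D: "?A1 \<subseteq> D \<times> D" unfolding D using ij by auto
  have inj: "inj_on \<Phi> D" using bij by (simp add: bij_betw_def)
  have PD: "\<Phi> ` D = P2" using bij by (simp add: bij_betw_def)
  have injf: "inj_on ?f ?A1"
  proof (rule inj_onI)
    fix p q assume pq: "p \<in> ?A1" "q \<in> ?A1" "?f p = ?f q"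
    then have "fst p \<in> D" "snd p \<in> D" "fst q \<in> D" "snd q \<in> D" using A1D by auto
    then show "p = q" using pq(3) inj unfolding inj_on_def by (simp add: prod_eq_iff)
  qed
  have img: "?f ` ?A1 = ?A2"
  proof
    show "?f ` ?A1 \<subseteq> ?A2"
    proof
      fix z assume "z \<in> ?f ` ?A1"
      then obtain a b where ab: "(a,b) \<in> ?A1" "z = (\<Phi> a, \<Phi> b)" by auto
      then have "a \<in> D" "b \<in> D" using A1D by auto
      then have "\<Phi> a \<in> P2" "\<Phi> b \<in> P2" using imageI[of _ D \<Phi>] PD by simp_all
      then show "z \<in> ?A2" using ab rk \<open>a \<in> D\<close> \<open>b \<in> D\<close> by auto
    qed
  next
    show "?A2 \<subseteq> ?f ` ?A1"
    proof
      fix ab' assume "ab' \<in> ?A2"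
      then obtain a b where ab: "a \<in> P2" "b \<in> P2" "rk2 a = i" "rk2 b = j" and abe: "ab' = (a,b)" by auto
      have "a \<in> \<Phi> ` D" "b \<in> \<Phi> ` D" using ab PD by simp_all
      then obtain a' b' where a': "a' \<in> D" "a = \<Phi> a'" and b': "b' \<in> D" "b = \<Phi> b'" by (auto elim!: imageE)
      have "a' \<in> P1" "b' \<in> P1" using a'(1) b'(1) DP by (simp_all add: subsetD)
      moreover have "rk1 a' = i" "rk1 b' = j" using rk[OF a'(1)] rk[OF b'(1)] ab a'(2) b'(2) by simp_all
      ultimately have "(a',b') \<in> ?A1" by simp
      moreover have "ab' = ?f (a',b')" using abe a' b' by simp
      ultimately show "ab' \<in> ?f ` ?A1" by blast
    qed
  qed
  have "whitney P1 le1 rk1 i j = (\<Sum>p\<in>?A1. mobius P2 le2 (\<Phi> (fst p)) (\<Phi> (snd p)))"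
    unfolding whitney_def
  proof (rule sum.cong)
    fix p assume "p \<in> ?A1"
    then have "fst p \<in> D" "snd p \<in> D" using A1D by auto
    then have "mobius P1 le1 (fst p) (snd p) = mobius P2 le2 (\<Phi> (fst p)) (\<Phi> (snd p))"
      using mobius_iso[of P1 le1 P2 le2 D \<Phi> "fst p" "snd p", OF fin1 po1 fin2 po2 DP down0 bij ord0] by blast
    then show "(case p of (x, y) \<Rightarrow> mobius P1 le1 x y) = mobius P2 le2 (\<Phi> (fst p)) (\<Phi> (snd p))"
      by (simp add: case_prod_beta)
  qed simp
  also have "\<dots> = (\<Sum>p\<in>?A2. mobius P2 le2 (fst p) (snd p))"
    using sum.reindex[OF injf, of "\<lambda>p. mobius P2 le2 (fst p) (snd p)"] img by simp
  finally show ?thesis unfolding whitney_def by (simp add: case_prod_beta)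
qed

lemma shift_sum_monom:
  fixes c :: "nat \<Rightarrow> 'a::comm_monoid_add"
  assumes "d \<le> n"
  shows "poly_shift (n - d) (\<Sum>j\<le>n. monom (c j) (n - j)) = (\<Sum>j\<le>d. monom (c j) (d - j))"
proof (rule poly_eqI)
  fix m
  have "coeff (poly_shift (n - d) (\<Sum>j\<le>n. monom (c j) (n - j))) m
      = (\<Sum>j\<le>n. if n - j = m + (n - d) then c j else 0)"
    by (simp add: coeff_poly_shift coeff_sum)
  also have "\<dots> = (\<Sum>j\<le>n. if j = d - m \<and> m \<le> d then c j else 0)"
    using assms by (intro sum.cong) auto
  also have "\<dots> = (\<Sum>j\<le>n. if j = d - m then (if m \<le> d then c j else 0) else 0)"
    by (intro sum.cong) auto
  also have "\<dots> = (if m \<le> d then c (d - m) else 0)"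
    using assms by (subst sum.delta) auto
  also have "\<dots> = (\<Sum>j\<le>d. if j = d - m then (if m \<le> d then c j else 0) else 0)"
    by (subst sum.delta) auto
  also have "\<dots> = (\<Sum>j\<le>d. if j = d - m \<and> m \<le> d then c j else 0)"
    by (intro sum.cong) auto
  also have "\<dots> = (\<Sum>j\<le>d. if d - j = m then c j else 0)"
    by (intro sum.cong) auto
  also have "\<dots> = coeff (\<Sum>j\<le>d. monom (c j) (d - j)) m"
    by (simp add: coeff_sum)
  finally show "coeff (poly_shift (n - d) (\<Sum>j\<le>n. monom (c j) (n - j))) m = coeff (\<Sum>j\<le>d. monom (c j) (d - j)) m" .
qed

lemma whitney_poly_of_alt:
  "whitney_poly_of P le rk D = (\<Sum>j\<le>D. monom (\<Sum>i\<le>j. monom (whitney P le rk i j) i) (D - j))"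
  unfolding whitney_poly_of_def by (simp add: monom_sum)


definition potential :: "('e \<Rightarrow> 'v \<times> 'v) \<Rightarrow> ('e \<Rightarrow> real) \<Rightarrow> 'e set \<Rightarrow> ('v \<Rightarrow> real) \<Rightarrow> bool" where
  "potential ends g S p \<longleftrightarrow> (\<forall>e\<in>S. g e = p (fst (ends e)) - p (snd (ends e)))"

lemma potential_mono: "potential ends g S p \<Longrightarrow> T \<subseteq> S \<Longrightarrow> potential ends g T p"
  unfolding potential_def by (simp add: subset_iff)

lemma gphi_pot:
  assumes "potential ends g S p" "e \<in> S" "joins ends e a b"
  shows "gphi ends g e a b = p a - p b"
proof -
  have ge: "g e = p (fst (ends e)) - p (snd (ends e))" using assms(1,2) unfolding potential_def by simp
  show ?thesis
  proof (cases "ends e = (a, b)")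
    case True then show ?thesis using ge unfolding gphi_def by simp
  next
    case False
    then have "ends e = (b, a)" using assms(3) unfolding joins_def by simp
    then show ?thesis using ge False unfolding gphi_def by simp
  qed
qed

lemma sum_cyclic_shift:
  fixes f :: "nat \<Rightarrow> real"
  assumes "0 < k"
  shows "(\<Sum>t<k. f ((t + 1) mod k)) = (\<Sum>t<k. f t)"
proof -
  obtain m where k: "k = Suc m" using assms by (cases k) auto
  have "(\<Sum>t<k. f ((t + 1) mod k)) = (\<Sum>t<m. f ((t + 1) mod k)) + f (Suc m mod Suc m)"
    unfolding k by simp
  also have "(\<Sum>t<m. f ((t + 1) mod k)) = (\<Sum>t<m. f (Suc t))"
    unfolding k by (intro sum.cong) auto
  also have "f (Suc m mod Suc m) = f 0" by simp
  also have "(\<Sum>t<m. f (Suc t)) + f 0 = (\<Sum>t<k. f t)"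
    unfolding k sum.lessThan_Suc_shift by simp
  finally show ?thesis .
qed

lemma potential_balanced:
  assumes "potential ends g S p"
  shows "balanced ends g S"
  unfolding balanced_def
proof (intro allI impI)
  fix vs es assume c: "is_circle ends S vs es"
  let ?k = "length vs"
  have k: "0 < ?k" using c unfolding is_circle_def by auto
  have "circle_gain ends g vs es = (\<Sum>t<?k. p (vs ! t) - p (vs ! ((t + 1) mod ?k)))"
    unfolding circle_gain_def
  proof (rule sum.cong)
    fix t assume t: "t \<in> {..<?k}"
    have "es ! t \<in> S" using c t unfolding is_circle_def by (auto simp: subset_iff)
    moreover have "joins ends (es ! t) (vs ! t) (vs ! ((t + 1) mod ?k))" using c t unfolding is_circle_def by auto
    ultimately show "gphi ends g (es ! t) (vs ! t) (vs ! ((t + 1) mod ?k)) = p (vs ! t) - p (vs ! ((t + 1) mod ?k))"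
      using gphi_pot[OF assms] by simp
  qed simp
  also have "\<dots> = (\<Sum>t<?k. p (vs ! t)) - (\<Sum>t<?k. p (vs ! ((t + 1) mod ?k)))"
    by (simp add: sum_subtractf)
  also have "(\<Sum>t<?k. p (vs ! ((t + 1) mod ?k))) = (\<Sum>t<?k. p (vs ! t))"
    using sum_cyclic_shift[OF k, of "\<lambda>t. p (vs ! t)"] by simp
  finally show "circle_gain ends g vs es = 0" by simp
qed

lemma circle_mono: "is_circle ends S vs es \<Longrightarrow> S \<subseteq> T \<Longrightarrow> is_circle ends T vs es"
  unfolding is_circle_def by auto

lemma balanced_mono: "balanced ends g T \<Longrightarrow> S \<subseteq> T \<Longrightarrow> balanced ends g S"
  unfolding balanced_def using circle_mono by metis

definition spath :: "('e \<Rightarrow> 'v \<times> 'v) \<Rightarrow> 'e set \<Rightarrow> 'v list \<Rightarrow> 'e list \<Rightarrow> bool" where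
  "spath ends S vs es \<longleftrightarrow> vs \<noteq> [] \<and> length vs = Suc (length es) \<and> distinct vs \<and> set es \<subseteq> S \<and>
     (\<forall>t < length es. joins ends (es ! t) (vs ! t) (vs ! Suc t))"

lemma adj_iff: "(a, b) \<in> adj ends S \<longleftrightarrow> (\<exists>e\<in>S. joins ends e a b)"
  unfolding adj_def by simp

lemma joins_sym: "joins ends e a b \<longleftrightarrow> joins ends e b a"
  unfolding joins_def by auto

lemma adj_sym: "sym (adj ends S)"
  unfolding sym_def adj_iff using joins_sym by metis

lemma equiv_adj: "equiv UNIV ((adj ends S)\<^sup>*)"
  unfolding equiv_def refl_on_def using sym_rtrancl[OF adj_sym] trans_rtrancl by auto

lemma class_eq: "(adj ends S)\<^sup>* `` {a} = (adj ends S)\<^sup>* `` {b} \<longleftrightarrow> (a, b) \<in> (adj ends S)\<^sup>*"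
  by (rule eq_equiv_class_iff[OF equiv_adj UNIV_I UNIV_I])

lemma rtr_sym: "(a, b) \<in> (adj ends S)\<^sup>* \<Longrightarrow> (b, a) \<in> (adj ends S)\<^sup>*"
  by (rule symD[OF sym_rtrancl[OF adj_sym]])

lemma edge_adj:
  assumes "e \<in> S"
  shows "(fst (ends e), snd (ends e)) \<in> adj ends S" "(snd (ends e), fst (ends e)) \<in> adj ends S"
  using assms unfolding adj_iff joins_def by (metis prod.collapse)+

lemma spath_exists:
  assumes "(a, b) \<in> (adj ends S)\<^sup>*"
  shows "\<exists>vs es. spath ends S vs es \<and> hd vs = a \<and> last vs = b"
  using assms
proof (induction rule: rtrancl_induct)
  case base
  have "spath ends S [a] []" unfolding spath_def by simp
  then show ?case by force
next
  case (step y z)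
  obtain vs es where p: "spath ends S vs es" "hd vs = a" "last vs = y" using step.IH by blast
  obtain e' where e': "e' \<in> S" "joins ends e' y z" using step.hyps(2) unfolding adj_iff by blast
  have ne: "vs \<noteq> []" and len: "length vs = Suc (length es)" and dv: "distinct vs" and es: "set es \<subseteq> S"
    and jn: "\<forall>t < length es. joins ends (es ! t) (vs ! t) (vs ! Suc t)"
    using p(1) unfolding spath_def by auto
  show ?case
  proof (cases "z \<in> set vs")
    case True
    then obtain k where k: "k < length vs" "vs ! k = z" by (metis in_set_conv_nth)
    let ?vs = "take (Suc k) vs" and ?es = "take k es"
    have "spath ends S ?vs ?es"
      unfolding spath_def
    proof (intro conjI)
      show "?vs \<noteq> []" using ne by simp
      show "length ?vs = Suc (length ?es)" using k len by simp
      show "distinct ?vs" using dv by simp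
      show "set ?es \<subseteq> S" using es set_take_subset by fastforce
      show "\<forall>t<length ?es. joins ends (?es ! t) (?vs ! t) (?vs ! Suc t)"
        using jn k len by simp
    qed
    moreover have "hd ?vs = a" using p(2) ne by simp
    moreover have "last ?vs = z"
    proof -
      have "?vs = take k vs @ [vs ! k]" using k(1) by (simp add: take_Suc_conv_app_nth)
      then show ?thesis using k(2) by simp
    qed
    ultimately show ?thesis by blast
  next
    case False
    let ?vs = "vs @ [z]" and ?es = "es @ [e']"
    have ly: "vs ! length es = y" using p(3) ne len by (simp add: last_conv_nth)
    have "spath ends S ?vs ?es"
      unfolding spath_def
    proof (intro conjI)
      show "?vs \<noteq> []" by simp
      show "length ?vs = Suc (length ?es)" using len by simp
      show "distinct ?vs" using dv False by simp
      show "set ?es \<subseteq> S" using es e' by simp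
      show "\<forall>t<length ?es. joins ends (?es ! t) (?vs ! t) (?vs ! Suc t)"
      proof (intro allI impI)
        fix t assume t: "t < length ?es"
        show "joins ends (?es ! t) (?vs ! t) (?vs ! Suc t)"
        proof (cases "t < length es")
          case True
          then show ?thesis using jn len by (simp add: nth_append)
        next
          case False
          then have "t = length es" using t by simp
          then show ?thesis using e' ly len by (simp add: nth_append)
        qed
      qed
    qed
    moreover have "hd ?vs = a" using p(2) ne by simp
    moreover have "last ?vs = z" by simp
    ultimately show ?thesis by blast
  qed
qed

lemma spath_distinct_edges:
  assumes "spath ends S vs es"
  shows "distinct es"
proof -
  have len: "length vs = Suc (length es)" and dv: "distinct vs"
    and jn: "\<forall>t < length es. joins ends (es ! t) (vs ! t) (vs ! Suc t)"
    using assms unfolding spath_def by auto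
  show ?thesis
    unfolding distinct_conv_nth
  proof (intro allI impI)
    fix i j assume ij: "i < length es" "j < length es" "i \<noteq> j"
    show "es ! i \<noteq> es ! j"
    proof
      assume eq: "es ! i = es ! j"
      have ji: "joins ends (es ! i) (vs ! i) (vs ! Suc i)" using jn ij by simp
      have jj: "joins ends (es ! i) (vs ! j) (vs ! Suc j)" using jn ij eq by simp
      have nd: "\<And>a b. a < length vs \<Longrightarrow> b < length vs \<Longrightarrow> vs ! a = vs ! b \<longleftrightarrow> a = b"
        using dv nth_eq_iff_index_eq by blast
      have "vs ! i = vs ! j \<or> (vs ! i = vs ! Suc j \<and> vs ! Suc i = vs ! j)"
        using ji jj unfolding joins_def by auto
      then show False using nd[of i j] nd[of i "Suc j"] nd[of "Suc i" j] ij len by auto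
    qed
  qed
qed

lemma spath_telescope:
  assumes "spath ends S vs es" "potential ends g S p"
  shows "(\<Sum>t<length es. gphi ends g (es ! t) (vs ! t) (vs ! Suc t)) = p (hd vs) - p (last vs)"
proof -
  have len: "length vs = Suc (length es)" and ne: "vs \<noteq> []" and es: "set es \<subseteq> S"
    and jn: "\<forall>t < length es. joins ends (es ! t) (vs ! t) (vs ! Suc t)"
    using assms(1) unfolding spath_def by auto
  have "(\<Sum>t<length es. gphi ends g (es ! t) (vs ! t) (vs ! Suc t)) = (\<Sum>t<length es. p (vs ! t) - p (vs ! Suc t))"
  proof (rule sum.cong)
    fix t assume "t \<in> {..<length es}"
    then have "t < length es" by simp
    then show "gphi ends g (es ! t) (vs ! t) (vs ! Suc t) = p (vs ! t) - p (vs ! Suc t)"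
      using gphi_pot[OF assms(2)] jn es nth_mem by (metis subsetD)
  qed simp
  also have "\<dots> = p (vs ! 0) - p (vs ! length es)" by (rule sum_lessThan_telescope')
  also have "\<dots> = p (hd vs) - p (last vs)" using ne len by (simp add: hd_conv_nth last_conv_nth)
  finally show ?thesis .
qed

lemma balanced_potential:
  assumes "finite S" "\<forall>e\<in>S. fst (ends e) \<noteq> snd (ends e)" "balanced ends g S"
  shows "\<exists>p. potential ends g S p"
  using assms
proof (induction S rule: finite_induct)
  case empty
  show ?case unfolding potential_def by simp
next
  case (insert e F)
  have "balanced ends g F" using insert.prems(2) balanced_mono by blast
  then obtain p0 where p0: "potential ends g F p0" using insert.IH insert.prems(1) by blast
  obtain a b where ab: "ends e = (a, b)" by (cases "ends e")
  have anb: "a \<noteq> b" using insert.prems(1) ab by (metis fst_conv insertI1 snd_conv)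
  show ?case
  proof (cases "(a, b) \<in> (adj ends F)\<^sup>*")
    case True
    obtain vs es where p: "spath ends F vs es" "hd vs = a" "last vs = b" using spath_exists[OF True] by blast
    have len: "length vs = Suc (length es)" and ne: "vs \<noteq> []" and es: "set es \<subseteq> F" and dv: "distinct vs"
      and jn: "\<forall>t < length es. joins ends (es ! t) (vs ! t) (vs ! Suc t)"
      using p(1) unfolding spath_def by auto
    have ln: "vs ! length es = b" using p(3) ne len by (simp add: last_conv_nth)
    have h0: "vs ! 0 = a" using p(2) ne by (simp add: hd_conv_nth)
    have l2: "length es \<noteq> 0" using ln h0 anb by auto
    let ?es = "es @ [e]"
    have circ: "is_circle ends (insert e F) vs ?es"
      unfolding is_circle_def
    proof (intro conjI)
      show "length ?es = length vs" using len by simp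
      show "2 \<le> length vs" using len l2 by linarith
      show "distinct vs" by (rule dv)
      show "distinct ?es" using spath_distinct_edges[OF p(1)] es insert.hyps(2) by auto
      show "set ?es \<subseteq> insert e F" using es by auto
      show "\<forall>t<length vs. joins ends (?es ! t) (vs ! t) (vs ! ((t + 1) mod length vs))"
      proof (intro allI impI)
        fix t assume t: "t < length vs"
        show "joins ends (?es ! t) (vs ! t) (vs ! ((t + 1) mod length vs))"
        proof (cases "t < length es")
          case True
          then show ?thesis using jn len by (simp add: nth_append)
        next
          case False
          then have tt: "t = length es" using t len by simp
          then have "(t + 1) mod length vs = 0" using len by simp
          then show ?thesis using tt ln h0 ab unfolding joins_def by (simp add: nth_append)
        qed
      qed
    qed
    have "circle_gain ends g vs ?es = 0" using insert.prems(2) circ unfolding balanced_def by blast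
    moreover have "circle_gain ends g vs ?es
        = (\<Sum>t<length es. gphi ends g (es ! t) (vs ! t) (vs ! Suc t)) + gphi ends g e b a"
    proof -
      have "circle_gain ends g vs ?es = (\<Sum>t<Suc (length es). gphi ends g (?es ! t) (vs ! t) (vs ! ((t + 1) mod length vs)))"
        unfolding circle_gain_def len ..
      also have "\<dots> = (\<Sum>t<length es. gphi ends g (?es ! t) (vs ! t) (vs ! ((t + 1) mod length vs)))
          + gphi ends g (?es ! length es) (vs ! length es) (vs ! ((length es + 1) mod length vs))"
        by simp
      also have "(\<Sum>t<length es. gphi ends g (?es ! t) (vs ! t) (vs ! ((t + 1) mod length vs)))
          = (\<Sum>t<length es. gphi ends g (es ! t) (vs ! t) (vs ! Suc t))"
        using len by (intro sum.cong) (auto simp: nth_append)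
      also have "gphi ends g (?es ! length es) (vs ! length es) (vs ! ((length es + 1) mod length vs)) = gphi ends g e b a"
        using len ln h0 by simp
      finally show ?thesis .
    qed
    moreover have "gphi ends g e b a = - g e" using ab anb unfolding gphi_def by auto
    moreover have "(\<Sum>t<length es. gphi ends g (es ! t) (vs ! t) (vs ! Suc t)) = p0 a - p0 b"
      using spath_telescope[OF p(1) p0] p(2,3) by simp
    ultimately have "g e = p0 a - p0 b" by simp
    then have "potential ends g (insert e F) p0" using p0 ab unfolding potential_def by simp
    then show ?thesis by blast
  next
    case False
    define R where "R = (adj ends F)\<^sup>*"
    define c where "c = g e - p0 a + p0 b"
    define p where "p = (\<lambda>x. if (a, x) \<in> R then p0 x + c else p0 x)"
    have "potential ends g (insert e F) p"
      unfolding potential_def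
    proof
      fix e' assume e': "e' \<in> insert e F"
      show "g e' = p (fst (ends e')) - p (snd (ends e'))"
      proof (cases "e' = e")
        case True
        have "(a, a) \<in> R" unfolding R_def by simp
        moreover have "(a, b) \<notin> R" using False unfolding R_def by simp
        ultimately show ?thesis using True ab unfolding p_def c_def by simp
      next
        case ne: False
        then have eF: "e' \<in> F" using e' by simp
        let ?u = "fst (ends e')" and ?v = "snd (ends e')"
        have "(?u, ?v) \<in> R" "(?v, ?u) \<in> R" using edge_adj[OF eF] unfolding R_def by auto
        then have "(a, ?u) \<in> R \<longleftrightarrow> (a, ?v) \<in> R" unfolding R_def by (meson rtrancl_trans)
        moreover have "g e' = p0 ?u - p0 ?v" using p0 eF unfolding potential_def by simp
        ultimately show ?thesis unfolding p_def by auto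
      qed
    qed
    then show ?thesis by blast
  qed
qed

definition rep :: "('e \<Rightarrow> 'v \<times> 'v) \<Rightarrow> 'e set \<Rightarrow> 'v \<Rightarrow> 'v" where
  "rep ends S i = (SOME x. x \<in> (adj ends S)\<^sup>* `` {i})"

lemma rep_in: "(i, rep ends S i) \<in> (adj ends S)\<^sup>*"
proof -
  have "i \<in> (adj ends S)\<^sup>* `` {i}" by simp
  then have "rep ends S i \<in> (adj ends S)\<^sup>* `` {i}" unfolding rep_def by (rule someI)
  then show ?thesis by simp
qed

lemma rep_eq: assumes "(a, b) \<in> (adj ends S)\<^sup>*" shows "rep ends S a = rep ends S b"
proof -
  have "(adj ends S)\<^sup>* `` {a} = (adj ends S)\<^sup>* `` {b}"
    using assms class_eq by metis
  then show ?thesis unfolding rep_def by simp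
qed

lemma rep_rep: "rep ends S (rep ends S i) = rep ends S i"
  using rep_eq[OF rep_in] by metis

lemma rep_eq_iff: "rep ends S a = rep ends S b \<longleftrightarrow> (a, b) \<in> (adj ends S)\<^sup>*"
proof
  assume "rep ends S a = rep ends S b"
  moreover have "(a, rep ends S a) \<in> (adj ends S)\<^sup>*" by (rule rep_in)
  moreover have "(rep ends S b, b) \<in> (adj ends S)\<^sup>*"
    using rtr_sym[OF rep_in[of b ends S]] .
  ultimately show "(a, b) \<in> (adj ends S)\<^sup>*" by (metis rtrancl_trans)
qed (rule rep_eq)

lemma respects_rep:
  "(\<forall>e\<in>S. f (fst (ends e)) = f (snd (ends e))) \<longleftrightarrow> (\<forall>i. f i = f (rep ends S i))"
proof
  assume h: "\<forall>e\<in>S. f (fst (ends e)) = f (snd (ends e))"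
  have fab: "f a = f b" if "(a, b) \<in> (adj ends S)\<^sup>*" for a b
    using that
  proof (induction rule: rtrancl_induct)
    case (step y z)
    obtain e where e: "e \<in> S" "joins ends e y z" using step.hyps(2) unfolding adj_iff by blast
    have "f y = f z" using h e unfolding joins_def by (metis fst_conv snd_conv)
    then show ?case using step.IH by simp
  qed simp
  show "\<forall>i. f i = f (rep ends S i)"
  proof
    fix i show "f i = f (rep ends S i)" by (rule fab[OF rep_in])
  qed
next
  assume h: "\<forall>i. f i = f (rep ends S i)"
  show "\<forall>e\<in>S. f (fst (ends e)) = f (snd (ends e))"
  proof
    fix e assume "e \<in> S"
    then have "rep ends S (fst (ends e)) = rep ends S (snd (ends e))"
      using edge_adj rep_eq by (metis r_into_rtrancl)
    then show "f (fst (ends e)) = f (snd (ends e))" using h by metis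
  qed
qed

lemma quotient_UNIV: "UNIV // (adj ends S)\<^sup>* = (\<lambda>x. (adj ends S)\<^sup>* `` {x}) ` UNIV"
  unfolding quotient_def by auto

lemma ncomp_le: fixes ends :: "'e \<Rightarrow> 'v::finite \<times> 'v" shows "ncomp ends S \<le> CARD('v)"
  unfolding ncomp_def quotient_UNIV using card_image_le[of "UNIV::'v set" "\<lambda>x. (adj ends S)\<^sup>* `` {x}"] by simp

lemma card_reps: fixes ends :: "'e \<Rightarrow> 'v::finite \<times> 'v" shows "card {i. rep ends S i = i} = ncomp ends S"
proof -
  let ?R = "(adj ends S)\<^sup>*"
  have "bij_betw (\<lambda>i. ?R `` {i}) {i. rep ends S i = i} (UNIV // ?R)"
    unfolding bij_betw_def
  proof
    show "inj_on (\<lambda>i. ?R `` {i}) {i. rep ends S i = i}"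
    proof (rule inj_onI)
      fix i j assume ij: "i \<in> {i. rep ends S i = i}" "j \<in> {i. rep ends S i = i}" "?R `` {i} = ?R `` {j}"
      then have "rep ends S i = rep ends S j" unfolding rep_def by simp
      then show "i = j" using ij by simp
    qed
    show "(\<lambda>i. ?R `` {i}) ` {i. rep ends S i = i} = UNIV // ?R"
    proof
      show "(\<lambda>i. ?R `` {i}) ` {i. rep ends S i = i} \<subseteq> UNIV // ?R" unfolding quotient_UNIV by auto
      show "UNIV // ?R \<subseteq> (\<lambda>i. ?R `` {i}) ` {i. rep ends S i = i}"
      proof
        fix C assume "C \<in> UNIV // ?R"
        then obtain x where x: "C = ?R `` {x}" unfolding quotient_UNIV by auto
        have e1: "?R `` {x} = ?R `` {rep ends S x}"
          using class_eq rep_in by metis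
        have e2: "rep ends S x \<in> {i. rep ends S i = i}" using rep_rep by simp
        show "C \<in> (\<lambda>i. ?R `` {i}) ` {i. rep ends S i = i}" unfolding x using rev_image_eqI[where f="\<lambda>i. ?R `` {i}", OF e2 e1] .
      qed
    qed
  qed
  then show ?thesis unfolding ncomp_def by (simp add: bij_betw_same_card)
qed

lemma card_nonreps: fixes ends :: "'e \<Rightarrow> 'v::finite \<times> 'v" shows "card {i. rep ends S i \<noteq> i} = CARD('v) - ncomp ends S"
proof -
  have "{i::'v. rep ends S i \<noteq> i} = UNIV - {i. rep ends S i = i}" by auto
  then have "card {i::'v. rep ends S i \<noteq> i} = card (UNIV::'v set) - card {i. rep ends S i = i}"
    by (simp add: card_Diff_subset)
  then show ?thesis using card_reps by metis
qed

lemma refine: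
  fixes ends :: "'e \<Rightarrow> 'v::finite \<times> 'v"
  assumes "S \<subseteq> T"
  shows "ncomp ends T \<le> ncomp ends S"
    and "ncomp ends T = ncomp ends S \<Longrightarrow> (adj ends T)\<^sup>* = (adj ends S)\<^sup>*"
proof -
  let ?R1 = "(adj ends S)\<^sup>*" and ?R2 = "(adj ends T)\<^sup>*"
  have sub: "?R1 \<subseteq> ?R2" using assms unfolding adj_def by (intro rtrancl_mono) auto
  let ?f = "\<lambda>C. ?R2 `` C"
  have fx: "?f (?R1 `` {x}) = ?R2 `` {x}" for x
  proof
    show "?f (?R1 `` {x}) \<subseteq> ?R2 `` {x}" using sub by (auto intro: rtrancl_trans)
    show "?R2 `` {x} \<subseteq> ?f (?R1 `` {x})" by auto
  qed
  have img: "?f ` (UNIV // ?R1) = UNIV // ?R2"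
    unfolding quotient_UNIV image_image fx ..
  have fin: "finite (UNIV // ?R1)" unfolding quotient_UNIV by simp
  show le: "ncomp ends T \<le> ncomp ends S"
    unfolding ncomp_def using card_image_le[OF fin, of ?f] img by simp
  assume eq: "ncomp ends T = ncomp ends S"
  have "inj_on ?f (UNIV // ?R1)" using inj_on_iff_eq_card[OF fin, of ?f] img eq unfolding ncomp_def by simp
  show "?R2 = ?R1"
  proof
    show "?R1 \<subseteq> ?R2" by (rule sub)
    show "?R2 \<subseteq> ?R1"
    proof
      fix ab assume ab: "ab \<in> ?R2"
      obtain a b where abe: "ab = (a, b)" by (cases ab)
      have "?R2 `` {a} = ?R2 `` {b}" using class_eq ab abe by metis
      then have "?f (?R1 `` {a}) = ?f (?R1 `` {b})" using fx by simp
      moreover have "?R1 `` {a} \<in> UNIV // ?R1" "?R1 `` {b} \<in> UNIV // ?R1" by (auto intro: quotientI)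
      ultimately have "?R1 `` {a} = ?R1 `` {b}" using inj_onD[OF \<open>inj_on ?f (UNIV // ?R1)\<close>] by metis
      then show "ab \<in> ?R1" using class_eq abe by metis
    qed
  qed
qed


inductive polyfun :: "('a::euclidean_space \<Rightarrow> real) \<Rightarrow> bool" where
  pconst: "polyfun (\<lambda>x. c)"
| plin: "linear f \<Longrightarrow> polyfun f"
| padd: "polyfun f \<Longrightarrow> polyfun g \<Longrightarrow> polyfun (\<lambda>x. f x + g x)"
| pmult: "polyfun f \<Longrightarrow> polyfun g \<Longrightarrow> polyfun (\<lambda>x. f x * g x)"

lemma polyfun_cont: "polyfun f \<Longrightarrow> continuous_on UNIV f"
proof (induction rule: polyfun.induct)
  case (plin f)
  then show ?case using linear_continuous_on linear_conv_bounded_linear by blast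
qed (auto intro: continuous_intros)

lemma polyfun_line: "polyfun f \<Longrightarrow> \<exists>p. \<forall>t. f (x + t *\<^sub>R D) = poly p t"
proof (induction rule: polyfun.induct)
  case (pconst c)
  show ?case by (rule exI[of _ "[:c:]"]) simp
next
  case (plin f)
  have "f (x + t *\<^sub>R D) = poly [:f x, f D:] t" for t
    using linear_add[OF plin] linear_scale[OF plin] by (simp add: algebra_simps)
  then show ?case by blast
next
  case (padd f g)
  then obtain p q where "\<forall>t. f (x + t *\<^sub>R D) = poly p t" "\<forall>t. g (x + t *\<^sub>R D) = poly q t" by blast
  then show ?case by (intro exI[of _ "p + q"]) simp
next
  case (pmult f g)
  then obtain p q where "\<forall>t. f (x + t *\<^sub>R D) = poly p t" "\<forall>t. g (x + t *\<^sub>R D) = poly q t" by blast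
  then show ?case by (intro exI[of _ "p * q"]) simp
qed

lemma polyfun_sum: "finite A \<Longrightarrow> (\<And>a. a \<in> A \<Longrightarrow> polyfun (f a)) \<Longrightarrow> polyfun (\<lambda>x. \<Sum>a\<in>A. f a x)"
proof (induction A rule: finite_induct)
  case empty
  then show ?case using pconst[of 0] by simp
next
  case (insert a A)
  then show ?case using padd[of "f a" "\<lambda>x. \<Sum>a\<in>A. f a x"] by simp
qed

lemma polyfun_prod: "finite A \<Longrightarrow> (\<And>a. a \<in> A \<Longrightarrow> polyfun (f a)) \<Longrightarrow> polyfun (\<lambda>x. \<Prod>a\<in>A. f a x)"
proof (induction A rule: finite_induct)
  case empty
  then show ?case using pconst[of 1] by simp
next
  case (insert a A)
  then show ?case using pmult[of "f a" "\<lambda>x. \<Prod>a\<in>A. f a x"] by simp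
qed

lemma polyfun_scale: assumes "polyfun f" shows "polyfun (\<lambda>x. c * f x)"
  using pmult[OF pconst[of c] assms] by simp

lemma polyfun_diff: "polyfun f \<Longrightarrow> polyfun g \<Longrightarrow> polyfun (\<lambda>x. f x - g x)"
  using padd[of f "\<lambda>x. (-1) * g x"] polyfun_scale[of g "-1"] by simp

lemma polyfun_open: "polyfun f \<Longrightarrow> open {x. f x \<noteq> 0}"
proof -
  assume "polyfun f"
  then have c: "continuous_on UNIV f" by (rule polyfun_cont)
  have "{x. f x \<noteq> 0} = f -` (- {0})" by auto
  moreover have "open (f -` (- {0}))" using open_vimage[OF _ c] by (simp add: open_Compl)
  ultimately show ?thesis by simp
qed

lemma polyfun_dense:
  assumes "polyfun f" "f x1 \<noteq> 0"
  shows "closure {x. f x \<noteq> 0} = UNIV"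
proof -
  have "x \<in> closure {x. f x \<noteq> 0}" for x
    unfolding closure_approachable
  proof (intro allI impI)
    fix e :: real assume e: "e > 0"
    define D where "D = x1 - x"
    obtain p where p: "\<forall>t. f (x + t *\<^sub>R D) = poly p t" using polyfun_line[OF assms(1)] by blast
    have "poly p 1 \<noteq> 0" using p[rule_format, of 1] assms(2) unfolding D_def by simp
    then have "p \<noteq> 0" by auto
    then have fin: "finite {t. poly p t = 0}" by (rule poly_roots_finite)
    define \<delta> where "\<delta> = e / (norm D + 1)"
    have dpos: "\<delta> > 0" using e unfolding \<delta>_def by (simp add: add_nonneg_pos)
    have "infinite {0<..<\<delta>}" using dpos by simp
    then have "\<not> {0<..<\<delta>} \<subseteq> {t. poly p t = 0}" using fin finite_subset by blast
    then obtain t where "t \<in> {0<..<\<delta>}" "t \<notin> {t. poly p t = 0}" by blast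
    then have t: "0 < t" "t < \<delta>" "poly p t \<noteq> 0" by auto
    have "dist (x + t *\<^sub>R D) x = norm (t *\<^sub>R D)" by (simp add: dist_norm)
    also have "\<dots> = t * norm D" using t by simp
    also have "\<dots> \<le> \<delta> * norm D" using t by (simp add: mult_right_mono)
    also have "\<dots> < e"
    proof -
      have "\<delta> * norm D = e * (norm D / (norm D + 1))" unfolding \<delta>_def by simp
      also have "\<dots> < e * 1"
      proof (intro mult_strict_left_mono[OF _ e])
        have "norm D < norm D + 1" by simp
        then show "norm D / (norm D + 1) < 1" by (simp add: divide_less_eq add_nonneg_pos)
      qed
      finally show ?thesis by simp
    qed
    finally have "dist (x + t *\<^sub>R D) x < e" .
    moreover have "x + t *\<^sub>R D \<in> {x. f x \<noteq> 0}" using p t by simp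
    ultimately show "\<exists>y\<in>{x. f x \<noteq> 0}. dist y x < e" by blast
  qed
  then show ?thesis by auto
qed

lemma open_dense_Inter:
  fixes F :: "'a::topological_space set set"
  assumes "finite F" "\<And>S. S \<in> F \<Longrightarrow> open S \<and> closure S = UNIV"
  shows "open (\<Inter>F) \<and> closure (\<Inter>F) = UNIV"
  using assms
proof (induction F rule: finite_induct)
  case empty
  then show ?case by simp
next
  case (insert S F)
  have oS: "open S" and dS: "closure S = UNIV" using insert.prems by auto
  have oF: "open (\<Inter>F)" and dF: "closure (\<Inter>F) = UNIV" using insert.IH insert.prems by auto
  have "S \<inter> closure (\<Inter>F) \<subseteq> closure (S \<inter> \<Inter>F)" by (rule open_Int_closure_subset[OF oS])
  then have "S \<subseteq> closure (S \<inter> \<Inter>F)" using dF by simp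
  then have "closure S \<subseteq> closure (S \<inter> \<Inter>F)" by (simp add: closure_minimal)
  then have "closure (S \<inter> \<Inter>F) = UNIV" using dS by auto
  then show ?case using oS oF by (simp add: open_Int)
qed

lemma polyfun_det:
  fixes M :: "'a::euclidean_space \<Rightarrow> real^'n^'n"
  assumes "\<And>i j. polyfun (\<lambda>x. M x $ i $ j)"
  shows "polyfun (\<lambda>x. det (M x))"
  unfolding det_def
  by (intro polyfun_sum polyfun_scale polyfun_prod assms) simp_all


lemma inner_cart: "(x::real^'d) \<bullet> y = (\<Sum>j\<in>UNIV. x $ j * y $ j)"
  by (simp add: inner_vec_def)

lemma LA_a:
  fixes u :: "'i \<Rightarrow> real^'d" and \<beta> :: "'i \<Rightarrow> real" and N :: "'i set" and \<sigma> :: "'i \<Rightarrow> 'd"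
  assumes inj: "inj_on \<sigma> N" and finN: "finite N"
    and det: "det (\<chi> k j. if k \<in> \<sigma> ` N then u (inv_into N \<sigma> k) $ j else (if k = j then 1 else 0) :: real^'d^'d) \<noteq> 0"
  shows "{P. \<forall>i\<in>N. P \<bullet> u i = \<beta> i} \<noteq> {} \<and> aff_dim {P. \<forall>i\<in>N. P \<bullet> u i = \<beta> i} = int (CARD('d) - card N)"
proof -
  define K where "K = \<sigma> ` N"
  define \<iota> where "\<iota> = inv_into N \<sigma>"
  define M :: "real^'d^'d" where "M = (\<chi> k j. if k \<in> \<sigma> ` N then u (inv_into N \<sigma> k) $ j else (if k = j then 1 else 0))"
  define S where "S = {P. \<forall>i\<in>N. P \<bullet> u i = \<beta> i}"
  define b :: "real^'d" where "b = (\<chi> k. if k \<in> K then \<beta> (\<iota> k) else 0)"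
  define Y where "Y = {y::real^'d. \<forall>k\<in>K. y $ k = b $ k}"
  define Y0 where "Y0 = {y::real^'d. \<forall>k\<in>K. y $ k = 0}"
  have iK: "\<iota> k \<in> N" "\<sigma> (\<iota> k) = k" if "k \<in> K" for k
    using that inv_into_into[of k \<sigma> N] f_inv_into_f[of k \<sigma> N] unfolding K_def \<iota>_def by auto
  have Ki: "\<iota> (\<sigma> i) = i" "\<sigma> i \<in> K" if "i \<in> N" for i
    using that inv_into_f_f[OF inj] unfolding K_def \<iota>_def by auto
  have Mrow: "(M *v P) $ k = P \<bullet> u (\<iota> k)" if "k \<in> K" for k P
    using that unfolding M_def matrix_mult_dot K_def \<iota>_def by (simp add: inner_commute)
  have SY: "P \<in> S \<longleftrightarrow> M *v P \<in> Y" for P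
  proof
    assume "P \<in> S"
    then show "M *v P \<in> Y" unfolding Y_def b_def S_def using Mrow iK by simp
  next
    assume h: "M *v P \<in> Y"
    show "P \<in> S" unfolding S_def
    proof (intro CollectI ballI)
      fix i assume i: "i \<in> N"
      have "(M *v P) $ \<sigma> i = b $ \<sigma> i" using h Ki[OF i] unfolding Y_def by blast
      then show "P \<bullet> u i = \<beta> i" using Mrow[OF Ki(2)[OF i]] Ki[OF i] unfolding b_def by simp
    qed
  qed
  have inv: "invertible M" using det invertible_det_nz unfolding M_def by blast
  then obtain M' where M': "M ** M' = mat 1" "M' ** M = mat 1" unfolding invertible_def by blast
  have SY': "S = (\<lambda>y. M' *v y) ` Y"
  proof
    show "S \<subseteq> (\<lambda>y. M' *v y) ` Y"
    proof
      fix P assume "P \<in> S"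
      then have "M *v P \<in> Y" using SY by blast
      moreover have "P = M' *v (M *v P)" by (simp add: matrix_vector_mul_assoc M')
      ultimately show "P \<in> (\<lambda>y. M' *v y) ` Y" by blast
    qed
    show "(\<lambda>y. M' *v y) ` Y \<subseteq> S"
    proof
      fix P assume "P \<in> (\<lambda>y. M' *v y) ` Y"
      then obtain y where y: "y \<in> Y" "P = M' *v y" by blast
      have "M *v P = y" unfolding y(2) by (simp add: matrix_vector_mul_assoc M')
      then show "P \<in> S" using SY y by simp
    qed
  qed
  have invM': "invertible M'" unfolding invertible_def using M' by blast
  have lin: "linear ((*v) M')" by (rule matrix_vector_mul_linear)
  have injM': "inj ((*v) M')" by (rule inj_matrix_vector_mult[OF invM'])
  have "aff_dim S = aff_dim Y"
    unfolding SY' using aff_dim_injective_linear_image[OF lin injM', of Y] by simp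
  moreover have "Y = (+) b ` Y0"
  proof
    show "Y \<subseteq> (+) b ` Y0"
    proof
      fix y assume "y \<in> Y"
      then have "y - b \<in> Y0" unfolding Y_def Y0_def by simp
      moreover have "y = b + (y - b)" by simp
      ultimately show "y \<in> (+) b ` Y0" by blast
    qed
    show "(+) b ` Y0 \<subseteq> Y" unfolding Y_def Y0_def by auto
  qed
  moreover have "aff_dim Y0 = int (dim Y0)"
  proof (rule aff_dim_subspace)
    show "subspace Y0" unfolding subspace_def Y0_def by simp
  qed
  moreover have "dim Y0 = card (UNIV - K)"
  proof -
    have "Y0 = {x::real^'d. \<forall>i. i \<notin> (UNIV - K) \<longrightarrow> x $ i = 0}" unfolding Y0_def by auto
    then have "vec.dim Y0 = card (UNIV - K)" using dim_substandard_cart[of "UNIV - K"] by simp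
    then show ?thesis using dim_vec_eq[of Y0] by simp
  qed
  moreover have "card (UNIV - K) = CARD('d) - card N"
  proof -
    have "card K = card N" unfolding K_def using card_image[OF inj] .
    then show ?thesis by (simp add: card_Diff_subset)
  qed
  moreover have "b \<in> Y" unfolding Y_def by simp
  ultimately have "aff_dim S = int (CARD('d) - card N)" "S \<noteq> {}"
    using aff_dim_translation_eq[of b Y0] SY' by auto
  then show ?thesis unfolding S_def by simp
qed

lemma LA_b:
  fixes u :: "'i \<Rightarrow> real^'d" and \<beta> :: "'i \<Rightarrow> real" and N :: "'i set" and \<tau> :: "'d option \<Rightarrow> 'i"
  assumes rng: "range \<tau> \<subseteq> N"
    and det: "det (\<chi> k l. case l of Some j \<Rightarrow> u (\<tau> k) $ j | None \<Rightarrow> \<beta> (\<tau> k) :: real^'d option^'d option) \<noteq> 0"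
  shows "{P. \<forall>i\<in>N. P \<bullet> u i = \<beta> i} = {}"
proof (rule ccontr)
  define M :: "real^'d option^'d option" where "M = (\<chi> k l. case l of Some j \<Rightarrow> u (\<tau> k) $ j | None \<Rightarrow> \<beta> (\<tau> k))"
  assume "{P. \<forall>i\<in>N. P \<bullet> u i = \<beta> i} \<noteq> {}"
  then obtain P where P: "\<forall>i\<in>N. P \<bullet> u i = \<beta> i" by blast
  define y :: "real^'d option" where "y = (\<chi> l. case l of Some j \<Rightarrow> P $ j | None \<Rightarrow> -1)"
  have "M *v y = 0"
  proof (subst vec_eq_iff, intro allI)
    fix k
    have "(M *v y) $ k = (\<Sum>l\<in>UNIV. M $ k $ l * y $ l)" by (simp add: matrix_vector_mult_def)
    also have "\<dots> = M $ k $ None * y $ None + (\<Sum>l\<in>range Some. M $ k $ l * y $ l)"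
      by (subst UNIV_option_conv) (simp add: sum.insert)
    also have "(\<Sum>l\<in>range Some. M $ k $ l * y $ l) = (\<Sum>j\<in>UNIV. M $ k $ Some j * y $ Some j)"
      by (subst sum.reindex) (auto simp: inj_on_def)
    also have "\<dots> = P \<bullet> u (\<tau> k)" unfolding M_def y_def inner_cart by (simp add: mult.commute)
    also have "P \<bullet> u (\<tau> k) = \<beta> (\<tau> k)" using P rng by auto
    finally show "(M *v y) $ k = 0 $ k" unfolding M_def y_def by simp
  qed
  moreover have "M *v 0 = 0" by simp
  moreover have "invertible M" using det invertible_det_nz unfolding M_def by blast
  ultimately have "y = 0" using inj_matrix_vector_mult[of M] unfolding inj_def by metis
  moreover have "y $ None = -1" unfolding y_def by simp
  ultimately show False by simp
qed


lemma sum_option: "(\<Sum>l\<in>(UNIV :: 'd::finite option set). f l) = f None + (\<Sum>j\<in>UNIV. f (Some j))"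
proof -
  have "(\<Sum>l\<in>(UNIV :: 'd option set). f l) = f None + (\<Sum>l\<in>range Some. f l)"
    by (subst UNIV_option_conv) (simp add: sum.insert)
  also have "(\<Sum>l\<in>range Some. f l) = (\<Sum>j\<in>UNIV. f (Some j))"
    by (subst sum.reindex) (auto simp: inj_on_def)
  finally show ?thesis .
qed

lemma dist_sq_eq:
  fixes P a b :: "real^'d"
  shows "(dist P a)\<^sup>2 - c = (dist P b)\<^sup>2 - c' \<longleftrightarrow> P \<bullet> (b - a) = (b \<bullet> b - a \<bullet> a + c - c') / 2"
proof -
  have d: "(dist P x)\<^sup>2 = P \<bullet> P - 2 * (P \<bullet> x) + x \<bullet> x" for x :: "real^'d"
    by (simp add: dist_norm power2_norm_eq_inner inner_diff_left inner_diff_right inner_commute)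
  show ?thesis unfolding d inner_diff_right by auto
qed

lemma pf_if: "polyfun f \<Longrightarrow> polyfun g \<Longrightarrow> polyfun (\<lambda>x. if c then f x else g x)"
  by (cases c) simp_all

lemma lin_coord: "linear (\<lambda>Q::(real^'d)^'v. Q $ a $ j)"
  by (rule linearI) simp_all

lemma pf_coord: "polyfun (\<lambda>Q::(real^'d)^'v. Q $ a $ j)"
  by (rule plin[OF lin_coord])

lemma pf_inner: "polyfun (\<lambda>Q::(real^'d)^'v. Q $ a \<bullet> Q $ b)"
  unfolding inner_cart by (intro polyfun_sum pmult pf_coord) simp

context
  fixes ends :: "'e \<Rightarrow> 'v::finite \<times> 'v" and g :: "'e \<Rightarrow> real"
begin

definition Xs :: "(real^'d)^'v \<Rightarrow> 'e set \<Rightarrow> (real^'d) set" where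
  "Xs Q T = \<Inter> (hyp ends g Q ` T)"

definition NN :: "'e set \<Rightarrow> 'v set" where
  "NN T = {i. rep ends T i \<noteq> i}"

definition uu :: "'e set \<Rightarrow> (real^'d)^'v \<Rightarrow> 'v \<Rightarrow> real^'d" where
  "uu T Q i = Q $ rep ends T i - Q $ i"

definition bb :: "'e set \<Rightarrow> ('v \<Rightarrow> real) \<Rightarrow> (real^'d)^'v \<Rightarrow> 'v \<Rightarrow> real" where
  "bb T p Q i = (Q $ rep ends T i \<bullet> Q $ rep ends T i - Q $ i \<bullet> Q $ i + p i - p (rep ends T i)) / 2"

lemma Xs_pot: "P \<in> Xs Q T \<longleftrightarrow> potential ends g T (\<lambda>i. (dist P (Q $ i))\<^sup>2)"
  unfolding Xs_def potential_def hyp_def by auto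

lemma Xs_mono: "S \<subseteq> T \<Longrightarrow> Xs Q T \<subseteq> Xs Q S"
  unfolding Xs_def by auto

lemma Xs_Un: "Xs Q (S \<union> T) = Xs Q S \<inter> Xs Q T"
  unfolding Xs_def by auto

lemma Xs_eq:
  assumes pot: "potential ends g T p"
  shows "Xs Q T = {P. \<forall>i\<in>NN T. P \<bullet> uu T Q i = bb T p Q i}"
proof -
  have "P \<in> Xs Q T \<longleftrightarrow> (\<forall>i\<in>NN T. P \<bullet> uu T Q i = bb T p Q i)" for P
  proof -
    define f where "f = (\<lambda>i. (dist P (Q $ i))\<^sup>2 - p i)"
    have "P \<in> Xs Q T \<longleftrightarrow> (\<forall>e\<in>T. f (fst (ends e)) = f (snd (ends e)))"
      unfolding Xs_pot potential_def f_def using pot unfolding potential_def by auto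
    also have "\<dots> \<longleftrightarrow> (\<forall>i. f i = f (rep ends T i))" by (rule respects_rep)
    also have "\<dots> \<longleftrightarrow> (\<forall>i\<in>NN T. P \<bullet> uu T Q i = bb T p Q i)"
    proof -
      have "f i = f (rep ends T i) \<longleftrightarrow> P \<bullet> uu T Q i = bb T p Q i" for i
        unfolding f_def uu_def bb_def by (rule dist_sq_eq)
      moreover have "f i = f (rep ends T i)" if "i \<notin> NN T" for i
        using that unfolding NN_def by simp
      ultimately show ?thesis by metis
    qed
    finally show ?thesis .
  qed
  then show ?thesis by blast
qed

definition sig :: "'e set \<Rightarrow> 'v \<Rightarrow> 'd::finite" where
  "sig T = (SOME f. inj_on f (NN T))"

definition condA :: "'e set \<Rightarrow> (real^'d::finite)^'v \<Rightarrow> real" where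
  "condA T Q = det (\<chi> k j. if k \<in> sig T ` NN T then uu T Q (inv_into (NN T) (sig T) k) $ j
      else (if k = j then 1 else 0) :: real^'d^'d)"

definition tau :: "'e set \<Rightarrow> 'd::finite option \<Rightarrow> 'v" where
  "tau T = (SOME f. inj f \<and> range f \<subseteq> NN T)"

definition condB :: "'e set \<Rightarrow> ('v \<Rightarrow> real) \<Rightarrow> (real^'d::finite)^'v \<Rightarrow> real" where
  "condB T p Q = det (\<chi> k l. case l of Some j \<Rightarrow> uu T Q ((tau T :: 'd option \<Rightarrow> 'v) k) $ j
      | None \<Rightarrow> bb T p Q (tau T k) :: real^'d option^'d option)"

lemma sig_inj:
  assumes "card (NN T) \<le> CARD('d)"
  shows "inj_on (sig T :: 'v \<Rightarrow> 'd::finite) (NN T)"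
proof -
  have "\<exists>f :: 'v \<Rightarrow> 'd. f ` NN T \<subseteq> UNIV \<and> inj_on f (NN T)"
    using card_le_inj[of "NN T" "UNIV :: 'd set"] assms by simp
  then have "\<exists>f :: 'v \<Rightarrow> 'd. inj_on f (NN T)" by blast
  then show ?thesis unfolding sig_def by (rule someI_ex)
qed

lemma tau_inj:
  assumes "CARD('d option) \<le> card (NN T)"
  shows "inj (tau T :: 'd::finite option \<Rightarrow> 'v) \<and> range (tau T :: 'd option \<Rightarrow> 'v) \<subseteq> NN T"
proof -
  have "\<exists>f :: 'd option \<Rightarrow> 'v. f ` UNIV \<subseteq> NN T \<and> inj_on f UNIV"
    using card_le_inj[of "UNIV :: 'd option set" "NN T"] assms by simp
  then have "\<exists>f :: 'd option \<Rightarrow> 'v. inj f \<and> range f \<subseteq> NN T" by blast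
  then show ?thesis unfolding tau_def by (rule someI_ex)
qed

lemma useA:
  fixes Q :: "(real^'d::finite)^'v"
  assumes pot: "potential ends g T p" and c: "card (NN T) \<le> CARD('d)" and nz: "condA T Q \<noteq> 0"
  shows "Xs Q T \<noteq> {} \<and> aff_dim (Xs Q T) = int (CARD('d) - card (NN T))"
  unfolding Xs_eq[OF pot]
  using LA_a[where u="uu T Q" and \<beta>="bb T p Q" and N="NN T" and \<sigma>="sig T :: 'v \<Rightarrow> 'd"] sig_inj[OF c] nz unfolding condA_def by simp

lemma useB:
  fixes Q :: "(real^'d::finite)^'v"
  assumes pot: "potential ends g T p" and c: "CARD('d option) \<le> card (NN T)" and nz: "condB T p Q \<noteq> 0"
  shows "Xs Q T = ({} :: (real^'d) set)"
  unfolding Xs_eq[OF pot]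
  using LA_b[where u="uu T Q" and \<beta>="bb T p Q" and N="NN T" and \<tau>="tau T :: 'd option \<Rightarrow> 'v"] tau_inj[OF c] nz unfolding condB_def by simp

lemma pf_uu: "polyfun (\<lambda>Q::(real^'d::finite)^'v. uu T Q i $ j)"
  unfolding uu_def by (simp add: polyfun_diff pf_coord)

lemma pf_bb: "polyfun (\<lambda>Q::(real^'d::finite)^'v. bb T p Q i)"
proof -
  have a: "polyfun (\<lambda>Q::(real^'d)^'v. Q $ rep ends T i \<bullet> Q $ rep ends T i)" by (rule pf_inner)
  have b: "polyfun (\<lambda>Q::(real^'d)^'v. Q $ i \<bullet> Q $ i)" by (rule pf_inner)
  have "polyfun (\<lambda>Q::(real^'d)^'v. (1/2) * ((Q $ rep ends T i \<bullet> Q $ rep ends T i - Q $ i \<bullet> Q $ i) + (p i - p (rep ends T i))))"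
    by (rule polyfun_scale[OF padd[OF polyfun_diff[OF a b] pconst]])
  then show ?thesis unfolding bb_def by (simp add: field_simps)
qed

lemma pf_condA: "polyfun (condA T :: (real^'d)^'v \<Rightarrow> real)"
  unfolding condA_def
  by (rule polyfun_det) (simp only: vec_lambda_beta, intro pf_if pf_uu pconst)

lemma pf_condB: "polyfun (condB T p :: (real^'d)^'v \<Rightarrow> real)"
  unfolding condB_def
proof (rule polyfun_det)
  fix i j :: "'d option"
  show "polyfun (\<lambda>Q. (\<chi> k l. case l of Some j \<Rightarrow> uu T Q ((tau T :: 'd option \<Rightarrow> 'v) k) $ j
      | None \<Rightarrow> bb T p Q (tau T k) :: real^'d option^'d option) $ i $ j)"
    by (cases j) (simp_all add: pf_uu pf_bb)
qed

end


context
  fixes ends :: "'e \<Rightarrow> 'v::finite \<times> 'v" and g :: "'e \<Rightarrow> real"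
begin

lemma rep_notin_NN: "rep ends T i \<notin> NN ends T"
  unfolding NN_def using rep_rep by simp

lemma witA:
  assumes c: "card (NN ends T) \<le> CARD('d::finite)"
  shows "\<exists>Q::(real^'d)^'v. condA ends T Q \<noteq> 0"
proof -
  let ?N = "NN ends T"
  let ?\<sigma> = "sig ends T :: 'v \<Rightarrow> 'd"
  have inj: "inj_on ?\<sigma> ?N" by (rule sig_inj[OF c])
  define Q :: "(real^'d)^'v" where "Q = (\<chi> v. if v \<in> ?N then - axis (?\<sigma> v) 1 else 0)"
  have "(\<chi> k j. if k \<in> ?\<sigma> ` ?N then uu ends T Q (inv_into ?N ?\<sigma> k) $ j
      else (if k = j then 1 else 0) :: real^'d^'d) = mat 1"
  proof (subst vec_eq_iff, intro allI, subst vec_eq_iff, intro allI)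
    fix k j
    show "(\<chi> k j. if k \<in> ?\<sigma> ` ?N then uu ends T Q (inv_into ?N ?\<sigma> k) $ j
      else (if k = j then 1 else 0) :: real^'d^'d) $ k $ j = mat 1 $ k $ j"
    proof (cases "k \<in> ?\<sigma> ` ?N")
      case True
      define i where "i = inv_into ?N ?\<sigma> k"
      have i: "i \<in> ?N" "?\<sigma> i = k" using True inv_into_into[of k ?\<sigma> ?N] f_inv_into_f[of k ?\<sigma> ?N]
        unfolding i_def by auto
      have "uu ends T Q i = axis k 1"
        unfolding uu_def Q_def using i rep_notin_NN[of T i] by simp
      then show ?thesis using True unfolding i_def mat_def axis_def by simp
    next
      case False
      then show ?thesis unfolding mat_def by simp
    qed
  qed
  then have "condA ends T Q = 1" unfolding condA_def by simp
  then show ?thesis by (intro exI[of _ Q]) simp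
qed

lemma witB:
  assumes c: "CARD('d::finite option) \<le> card (NN ends T)"
  shows "\<exists>Q::(real^'d)^'v. condB ends T p Q \<noteq> 0"
proof -
  let ?N = "NN ends T"
  let ?\<tau> = "tau ends T :: 'd option \<Rightarrow> 'v"
  have inj: "inj ?\<tau>" and rng: "range ?\<tau> \<subseteq> ?N" using tau_inj[OF c] by auto
  define j0 :: 'd where "j0 = undefined"
  define cc where "cc = (\<lambda>k. p (?\<tau> k) - p (rep ends T (?\<tau> k)))"
  define F where "F = (\<lambda>s::real. (cc None - s^2) / 2 - s * ((cc (Some j0) - 1) / 2))"
  obtain s where s: "F s \<noteq> 0"
  proof -
    have "F 0 \<noteq> 0 \<or> F 1 \<noteq> 0 \<or> F (-1) \<noteq> 0" unfolding F_def by (auto simp: field_simps)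
    then show ?thesis using that by blast
  qed
  define qf :: "'d option \<Rightarrow> real^'d" where
    "qf = (\<lambda>k. case k of Some j \<Rightarrow> - axis j 1 | None \<Rightarrow> - (s *\<^sub>R axis j0 1))"
  define Q :: "(real^'d)^'v" where "Q = (\<chi> v. if v \<in> range ?\<tau> then qf (inv ?\<tau> v) else 0)"
  have Qt: "Q $ ?\<tau> k = qf k" for k unfolding Q_def using inv_f_f[OF inj] by simp
  have Qr: "Q $ rep ends T (?\<tau> k) = 0" for k
  proof -
    have "rep ends T (?\<tau> k) \<notin> range ?\<tau>" using rep_notin_NN[of T "?\<tau> k"] rng by blast
    then show ?thesis unfolding Q_def by simp
  qed
  have uu: "uu ends T Q (?\<tau> k) = - qf k" for k unfolding uu_def Qt Qr by simp
  have bb: "bb ends T p Q (?\<tau> k) = (cc k - qf k \<bullet> qf k) / 2" for k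
    unfolding bb_def Qt Qr cc_def by simp
  define M :: "real^'d option^'d option" where
    "M = (\<chi> k l. case l of Some j \<Rightarrow> uu ends T Q (?\<tau> k) $ j | None \<Rightarrow> bb ends T p Q (?\<tau> k))"
  have row: "(M *v y) $ k = (cc k - qf k \<bullet> qf k) / 2 * y $ None + (- qf k) \<bullet> (\<chi> j. y $ Some j)" for y k
  proof -
    have "(M *v y) $ k = (\<Sum>l\<in>UNIV. M $ k $ l * y $ l)" by (simp add: matrix_vector_mult_def)
    also have "\<dots> = M $ k $ None * y $ None + (\<Sum>j\<in>UNIV. M $ k $ Some j * y $ Some j)"
      by (rule sum_option)
    also have "(\<Sum>j\<in>UNIV. M $ k $ Some j * y $ Some j) = (- qf k) \<bullet> (\<chi> j. y $ Some j)"
      unfolding inner_cart M_def uu by simp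
    finally show ?thesis unfolding M_def bb by simp
  qed
  have ker: "y = 0" if y: "M *v y = 0" for y
  proof -
    have r: "(cc k - qf k \<bullet> qf k) / 2 * y $ None + (- qf k) \<bullet> (\<chi> j. y $ Some j) = 0" for k
      using row[of y k] y by simp
    have rs: "(cc (Some j) - 1) / 2 * y $ None + y $ Some j = 0" for j
      using r[of "Some j"] unfolding qf_def by (simp add: inner_axis')
    have rn: "(cc None - s^2) / 2 * y $ None + s * y $ Some j0 = 0"
      using r[of None] unfolding qf_def by (simp add: inner_axis' power2_eq_square)
    have "y $ None * F s = ((cc None - s^2) / 2 * y $ None + s * y $ Some j0)
        - s * ((cc (Some j0) - 1) / 2 * y $ None + y $ Some j0)"
      unfolding F_def by (simp add: algebra_simps)
    also have "\<dots> = 0" using rs[of j0] rn by simp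
    finally have "y $ None * F s = 0" .
    then have yN: "y $ None = 0" using s by simp
    then have yS: "y $ Some j = 0" for j using rs[of j] by simp
    show "y = 0"
    proof (subst vec_eq_iff, intro allI)
      fix l show "y $ l = 0 $ l" using yN yS by (cases l) simp_all
    qed
  qed
  have "inj ((*v) M)"
  proof (rule injI)
    fix x y assume "M *v x = M *v y"
    then have "M *v (x - y) = 0" by (simp add: matrix_vector_mult_diff_distrib)
    then have "x - y = 0" by (rule ker)
    then show "x = y" by simp
  qed
  then have "det M \<noteq> 0" using det_nz_iff_inj[OF matrix_vector_mul_linear[of M]] by simp
  then show ?thesis unfolding condB_def M_def by blast
qed

end


lemma card_opt: "CARD('d::finite option) = Suc CARD('d)"
proof -
  have "card (UNIV :: 'd option set) = card (insert None (range (Some :: 'd \<Rightarrow> 'd option)))"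
    by (simp add: UNIV_option_conv[symmetric])
  also have "\<dots> = Suc (card (range (Some :: 'd \<Rightarrow> 'd option)))" by (subst card_insert_disjoint) auto
  also have "card (range (Some :: 'd \<Rightarrow> 'd option)) = CARD('d)" by (rule card_image) (simp add: inj_on_def)
  finally show ?thesis .
qed

lemma porder_sub: "porder P (\<subseteq>)"
  unfolding porder_def by auto

lemma porder_rev: "porder P revincl"
  unfolding porder_def revincl_def by auto

context
  fixes E :: "'e set" and ends :: "'e \<Rightarrow> 'v::finite \<times> 'v" and g :: "'e \<Rightarrow> real"
  assumes finE: "finite E" and noloop: "\<forall>e \<in> E. fst (ends e) \<noteq> snd (ends e)"
begin

definition TT :: "'e set set" where
  "TT = {T. T \<subseteq> E \<and> (\<exists>p. potential ends g T p)}"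

definition pot :: "'e set \<Rightarrow> 'v \<Rightarrow> real" where
  "pot T = (SOME p. potential ends g T p)"

definition cond :: "'e set \<Rightarrow> (real^'d::finite)^'v \<Rightarrow> real" where
  "cond T Q = (if card (NN ends T) \<le> CARD('d) then condA ends T Q else condB ends T (pot T) Q)"

definition good :: "(real^'d::finite)^'v \<Rightarrow> bool" where
  "good Q \<longleftrightarrow> (\<forall>T\<in>TT. cond T Q \<noteq> 0)"

lemma finTT: "finite TT"
  unfolding TT_def using finE by (auto intro: finite_subset[of _ "Pow E"])

lemma pot_pot: assumes "T \<in> TT" shows "potential ends g T (pot T)"
proof -
  obtain p where "potential ends g T p" using assms unfolding TT_def by blast
  then show ?thesis unfolding pot_def by (rule someI[of "potential ends g T"])
qed

lemma cond_open_dense: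
  "open {Q::(real^'d::finite)^'v. cond T Q \<noteq> 0} \<and> closure {Q::(real^'d)^'v. cond T Q \<noteq> 0} = UNIV"
proof -
  have pf: "polyfun (cond T :: (real^'d)^'v \<Rightarrow> real)"
    unfolding cond_def by (intro pf_if pf_condA pf_condB)
  have "\<exists>Q::(real^'d)^'v. cond T Q \<noteq> 0"
  proof (cases "card (NN ends T) \<le> CARD('d)")
    case True
    then obtain Q :: "(real^'d)^'v" where "condA ends T Q \<noteq> 0" using witA by blast
    then show ?thesis using True unfolding cond_def by auto
  next
    case False
    then have "CARD('d option) \<le> card (NN ends T)" using card_opt by simp
    then obtain Q :: "(real^'d)^'v" where "condB ends T (pot T) Q \<noteq> 0" using witB by blast
    then show ?thesis using False unfolding cond_def by auto
  qed
  then obtain Q1 :: "(real^'d)^'v" where "cond T Q1 \<noteq> 0" by blast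
  then show ?thesis using polyfun_open[OF pf] polyfun_dense[OF pf] by blast
qed

lemma good_open_dense:
  "open {Q::(real^'d::finite)^'v. good Q} \<and> closure {Q::(real^'d)^'v. good Q} = UNIV"
proof -
  have eq: "{Q::(real^'d)^'v. good Q} = \<Inter> ((\<lambda>T. {Q. cond T Q \<noteq> 0}) ` TT)"
    unfolding good_def by auto
  show ?thesis unfolding eq
    by (rule open_dense_Inter) (auto simp: finTT cond_open_dense)
qed

lemma K1:
  fixes Q :: "(real^'d::finite)^'v"
  assumes gd: "good Q" and T: "T \<subseteq> E" "potential ends g T p0" and c: "card (NN ends T) \<le> CARD('d)"
  shows "Xs ends g Q T \<noteq> {} \<and> aff_dim (Xs ends g Q T) = int (CARD('d) - card (NN ends T))"
proof -
  have TT: "T \<in> TT" unfolding TT_def using T by blast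
  then have "condA ends T Q \<noteq> 0" using gd c unfolding good_def cond_def by auto
  then show ?thesis using useA[OF pot_pot[OF TT] c] by blast
qed

lemma K2:
  fixes Q :: "(real^'d::finite)^'v"
  assumes gd: "good Q" and T: "T \<subseteq> E" "potential ends g T p0" and c: "\<not> card (NN ends T) \<le> CARD('d)"
  shows "Xs ends g Q T = {}"
proof -
  have TT: "T \<in> TT" unfolding TT_def using T by blast
  then have "condB ends T (pot T) Q \<noteq> 0" using gd c unfolding good_def cond_def by auto
  moreover have "CARD('d option) \<le> card (NN ends T)" using c card_opt by simp
  ultimately show ?thesis using useB[OF pot_pot[OF TT]] by blast
qed

lemma K3:
  fixes Q :: "(real^'d::finite)^'v"
  assumes gd: "good Q" and T: "T \<subseteq> E" and ne: "Xs ends g Q T \<noteq> {}"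
  shows "(\<exists>p. potential ends g T p) \<and> card (NN ends T) \<le> CARD('d)"
proof -
  obtain P where "P \<in> Xs ends g Q T" using ne by blast
  then have pt: "potential ends g T (\<lambda>i. (dist P (Q $ i))\<^sup>2)" by (simp add: Xs_pot)
  then show ?thesis using K2[OF gd T pt] ne by blast
qed

lemma NN_card: "card (NN ends T) = latb_rank ends T"
  unfolding NN_def latb_rank_def by (rule card_nonreps)

lemma flat_pot:
  assumes "S \<in> latb E ends g"
  shows "S \<subseteq> E" "\<exists>p. potential ends g S p"
proof -
  show sE: "S \<subseteq> E" using assms unfolding latb_def balanced_flat_def by blast
  have "balanced ends g S" using assms unfolding latb_def balanced_flat_def by blast
  then show "\<exists>p. potential ends g S p"
    using balanced_potential[of S ends g] finite_subset[OF sE finE] noloop sE by blast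
qed

lemma pots_diff:
  assumes "potential ends g S p" "potential ends g S q" "(a, b) \<in> (adj ends S)\<^sup>*"
  shows "p a - p b = q a - q b"
proof -
  let ?f = "\<lambda>i. p i - q i"
  have "\<forall>e\<in>S. ?f (fst (ends e)) = ?f (snd (ends e))"
    using assms(1,2) unfolding potential_def by auto
  then have "\<forall>i. ?f i = ?f (rep ends S i)" using respects_rep[where S=S and ends=ends and f="?f"] by blast
  moreover have "rep ends S a = rep ends S b" using rep_eq[OF assms(3)] .
  ultimately have "?f a = ?f b" by metis
  then show ?thesis by simp
qed

lemma ends_adj: "e \<in> S \<Longrightarrow> ends e \<in> (adj ends S)\<^sup>*"
  using edge_adj(1)[of e S ends] by (metis prod.collapse r_into_rtrancl)

lemma X_in:
  fixes Q :: "(real^'d::finite)^'v"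
  assumes gd: "good Q" and S: "S \<in> latb E ends g" "latb_rank ends S \<le> CARD('d)"
  shows "Xs ends g Q S \<in> arr_lattice E ends g Q" "codim (Xs ends g Q S) = latb_rank ends S"
proof -
  obtain p where p: "potential ends g S p" using flat_pot[OF S(1)] by blast
  have sE: "S \<subseteq> E" using flat_pot[OF S(1)] by blast
  have k: "Xs ends g Q S \<noteq> {} \<and> aff_dim (Xs ends g Q S) = int (CARD('d) - latb_rank ends S)"
    using K1[OF gd sE p] S(2) NN_card by simp
  show "Xs ends g Q S \<in> arr_lattice E ends g Q"
    unfolding arr_lattice_def using k sE unfolding Xs_def by blast
  show "codim (Xs ends g Q S) = latb_rank ends S"
    unfolding codim_def using k S(2) by simp
qed

lemma X_order:
  fixes Q :: "(real^'d::finite)^'v"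
  assumes gd: "good Q" and S: "S \<in> latb E ends g" "latb_rank ends S \<le> CARD('d)"
    and S': "S' \<in> latb E ends g" "latb_rank ends S' \<le> CARD('d)"
    and sub: "Xs ends g Q S' \<subseteq> Xs ends g Q S"
  shows "S \<subseteq> S'"
proof -
  let ?T = "S \<union> S'"
  have sE: "S \<subseteq> E" "S' \<subseteq> E" using flat_pot S S' by blast+
  obtain p' where p': "potential ends g S' p'" using flat_pot[OF S'(1)] by blast
  have kS': "Xs ends g Q S' \<noteq> {} \<and> aff_dim (Xs ends g Q S') = int (CARD('d) - latb_rank ends S')"
    using K1[OF gd sE(2) p'] S'(2) NN_card by simp
  have XT: "Xs ends g Q ?T = Xs ends g Q S'" using sub unfolding Xs_Un by blast
  have TE: "?T \<subseteq> E" using sE by blast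
  obtain pT where pT: "potential ends g ?T pT" and cT: "card (NN ends ?T) \<le> CARD('d)"
    using K3[OF gd TE] XT kS' by metis
  have kT: "aff_dim (Xs ends g Q ?T) = int (CARD('d) - card (NN ends ?T))"
    using K1[OF gd TE pT cT] by blast
  have "card (NN ends ?T) = card (NN ends S')"
    using kT kS' XT cT S'(2) NN_card[of S'] by simp
  then have "ncomp ends ?T = ncomp ends S'"
    using card_nonreps[of ends ?T] card_nonreps[of ends S'] ncomp_le[of ends ?T] ncomp_le[of ends S']
    unfolding NN_def by simp
  then have R: "(adj ends ?T)\<^sup>* = (adj ends S')\<^sup>*" using refine(2)[of S' ?T ends] by simp
  show "S \<subseteq> S'"
  proof
    fix e assume eS: "e \<in> S"
    show "e \<in> S'"
    proof (rule ccontr)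
      assume nS': "e \<notin> S'"
      have "e \<in> E - S'" using eS sE nS' by blast
      moreover have "ends e \<in> (adj ends S')\<^sup>*" using ends_adj[of e ?T] eS R by simp
      moreover have "balanced ends g (insert e S')"
        using potential_balanced[OF potential_mono[OF pT]] eS by blast
      ultimately show False using S'(1) unfolding latb_def balanced_flat_def by blast
    qed
  qed
qed

lemma X_surj:
  fixes Q :: "(real^'d::finite)^'v"
  assumes gd: "good Q" and X: "X \<in> arr_lattice E ends g Q"
  shows "\<exists>S. S \<in> latb E ends g \<and> latb_rank ends S \<le> CARD('d) \<and> Xs ends g Q S = X"
proof -
  obtain T where T: "T \<subseteq> E" "X = Xs ends g Q T" and ne: "X \<noteq> {}"
    using X unfolding arr_lattice_def Xs_def by blast
  obtain P0 where P0: "P0 \<in> X" using ne by blast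
  define p0 where "p0 = (\<lambda>i. (dist P0 (Q $ i))\<^sup>2)"
  have p0: "potential ends g T p0" using P0 T(2) unfolding p0_def by (simp add: Xs_pot)
  have cT: "card (NN ends T) \<le> CARD('d)" using K3[OF gd T(1)] ne T(2) by blast
  define R where "R = (adj ends T)\<^sup>*"
  define cl where "cl = {e\<in>E. ends e \<in> R \<and> g e = p0 (fst (ends e)) - p0 (snd (ends e))}"
  have Tcl: "T \<subseteq> cl"
  proof
    fix e assume e: "e \<in> T"
    then show "e \<in> cl" using T(1) ends_adj[of e T] p0 unfolding cl_def R_def potential_def by auto
  qed
  have clE: "cl \<subseteq> E" unfolding cl_def by blast
  have pcl: "potential ends g cl p0" unfolding cl_def potential_def by blast
  have Rcl: "(adj ends cl)\<^sup>* = R"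
  proof -
    have "adj ends T \<subseteq> adj ends cl" using Tcl unfolding adj_def by blast
    moreover have "adj ends cl \<subseteq> R"
    proof
      fix ab assume "ab \<in> adj ends cl"
      then obtain a b e where ab: "ab = (a, b)" "e \<in> cl" "joins ends e a b" unfolding adj_def by blast
      have "ends e \<in> R" using ab(2) unfolding cl_def by blast
      then have "(a, b) \<in> R \<or> (b, a) \<in> R" using ab(3) unfolding joins_def by auto
      then show "ab \<in> R" using rtr_sym[of _ _ ends T] ab(1) unfolding R_def by blast
    qed
    ultimately show ?thesis unfolding R_def using rtrancl_subset[of "adj ends T" "adj ends cl"] by simp
  qed
  have repeq: "rep ends cl = rep ends T" unfolding rep_def[abs_def] Rcl R_def ..
  have ncl: "ncomp ends cl = ncomp ends T" unfolding ncomp_def Rcl R_def ..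
  have rk: "latb_rank ends cl \<le> CARD('d)" using cT NN_card[of T] ncl unfolding latb_rank_def by simp
  have bal: "balanced ends g cl" by (rule potential_balanced[OF pcl])
  have flat: "balanced_flat E ends g cl"
    unfolding balanced_flat_def
  proof (intro conjI ballI impI)
    show "cl \<subseteq> E" by (rule clE)
    show "balanced ends g cl" by (rule bal)
    fix e assume e: "e \<in> E - cl" and en: "ends e \<in> (adj ends cl)\<^sup>*"
    show "\<not> balanced ends g (insert e cl)"
    proof
      assume b: "balanced ends g (insert e cl)"
      have iE: "insert e cl \<subseteq> E" using e clE by blast
      obtain p' where p': "potential ends g (insert e cl) p'"
        using balanced_potential[of "insert e cl" ends g] finite_subset[OF iE finE] noloop iE b by blast
      have "g e = p' (fst (ends e)) - p' (snd (ends e))" using p' unfolding potential_def by simp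
      also have "\<dots> = p0 (fst (ends e)) - p0 (snd (ends e))"
        using pots_diff[OF potential_mono[OF p'] pcl] en by (metis prod.collapse subset_insertI)
      finally have "e \<in> cl" using e en Rcl unfolding cl_def by simp
      then show False using e by blast
    qed
  qed
  have Xcl: "Xs ends g Q cl = X"
  proof
    show "Xs ends g Q cl \<subseteq> X" using Xs_mono[OF Tcl] T(2) by simp
    show "X \<subseteq> Xs ends g Q cl"
    proof
      fix P assume "P \<in> X"
      then have pP: "potential ends g T (\<lambda>i. (dist P (Q $ i))\<^sup>2)" using T(2) by (simp add: Xs_pot)
      have "potential ends g cl (\<lambda>i. (dist P (Q $ i))\<^sup>2)"
        unfolding potential_def
      proof
        fix e assume e: "e \<in> cl"
        have "ends e \<in> R" using e unfolding cl_def by blast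
        then have "(dist P (Q $ fst (ends e)))\<^sup>2 - (dist P (Q $ snd (ends e)))\<^sup>2 = p0 (fst (ends e)) - p0 (snd (ends e))"
          using pots_diff[OF pP p0] unfolding R_def by (metis prod.collapse)
        then show "g e = (dist P (Q $ fst (ends e)))\<^sup>2 - (dist P (Q $ snd (ends e)))\<^sup>2"
          using e unfolding cl_def by simp
      qed
      then show "P \<in> Xs ends g Q cl" by (simp add: Xs_pot)
    qed
  qed
  show ?thesis using flat rk Xcl unfolding latb_def by blast
qed

end


theorem theorem10p3:
  fixes E :: "'e set" and ends :: "'e \<Rightarrow> 'v::finite \<times> 'v" and g :: "'e \<Rightarrow> real"
  assumes "finite E"
    and "\<forall>e \<in> E. fst (ends e) \<noteq> snd (ends e)"
    and "CARD('d::finite) \<le> CARD('v)"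
  shows "\<exists>U :: ((real^'d)^'v) set. open U \<and> closure U = UNIV \<and>
           (\<forall>Q \<in> U.
              arr_char_poly E ends g Q = poly_part_div (CARD('v) - CARD('d)) (gg_char_poly E ends g) \<and>
              arr_whitney_poly E ends g Q = poly_part_div (CARD('v) - CARD('d)) (gg_whitney_poly E ends g))"
proof -
  note finE = assms(1) and noloop = assms(2) and dn = assms(3)
  define U where "U = {Q::(real^'d)^'v. good E ends g Q}"
  have od: "open U \<and> closure U = UNIV" unfolding U_def by (rule good_open_dense[OF finE noloop])
  have main: "arr_char_poly E ends g Q = poly_part_div (CARD('v) - CARD('d)) (gg_char_poly E ends g) \<and>
              arr_whitney_poly E ends g Q = poly_part_div (CARD('v) - CARD('d)) (gg_whitney_poly E ends g)"
    if Q: "Q \<in> U" for Q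
  proof -
    have gd: "good E ends g Q" using Q unfolding U_def by simp
    let ?P1 = "latb E ends g" and ?P2 = "arr_lattice E ends g Q"
    let ?D = "{S \<in> ?P1. latb_rank ends S \<le> CARD('d)}"
    let ?\<Phi> = "Xs ends g Q"
    have fin1: "finite ?P1"
      unfolding latb_def balanced_flat_def using finE by (auto intro: finite_subset[of _ "Pow E"])
    have fin2: "finite ?P2"
    proof -
      have "?P2 \<subseteq> (\<lambda>T. \<Inter> (hyp ends g Q ` T)) ` Pow E" unfolding arr_lattice_def by blast
      then show ?thesis using finE by (auto intro: finite_subset)
    qed
    have down0: "\<forall>y\<in>?D. \<forall>x\<in>?P1. x \<subseteq> y \<longrightarrow> x \<in> ?D"
    proof (intro ballI impI)
      fix y x assume y: "y \<in> ?D" and x: "x \<in> ?P1" and xy: "x \<subseteq> y"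
      have "ncomp ends y \<le> ncomp ends x" by (rule refine(1)[OF xy])
      then have "latb_rank ends x \<le> latb_rank ends y" unfolding latb_rank_def by simp
      then show "x \<in> ?D" using x y by simp
    qed
    have ord: "revincl (?\<Phi> a) (?\<Phi> b) \<longleftrightarrow> a \<subseteq> b" if a: "a \<in> ?D" and b: "b \<in> ?D" for a b
    proof
      assume "revincl (?\<Phi> a) (?\<Phi> b)"
      then have "?\<Phi> b \<subseteq> ?\<Phi> a" unfolding revincl_def .
      then show "a \<subseteq> b" using X_order[OF finE noloop gd] a b by blast
    next
      assume "a \<subseteq> b"
      then show "revincl (?\<Phi> a) (?\<Phi> b)" unfolding revincl_def by (rule Xs_mono)
    qed
    have ord0: "\<forall>a\<in>?D. \<forall>b\<in>?D. revincl (?\<Phi> a) (?\<Phi> b) \<longleftrightarrow> a \<subseteq> b" using ord by blast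
    have bij: "bij_betw ?\<Phi> ?D ?P2"
      unfolding bij_betw_def
    proof
      show "inj_on ?\<Phi> ?D"
      proof (rule inj_onI)
        fix a b assume a: "a \<in> ?D" and b: "b \<in> ?D" and eq: "?\<Phi> a = ?\<Phi> b"
        have "a \<subseteq> b" using ord[OF a b] eq unfolding revincl_def by simp
        moreover have "b \<subseteq> a" using ord[OF b a] eq unfolding revincl_def by simp
        ultimately show "a = b" by (rule subset_antisym)
      qed
      show "?\<Phi> ` ?D = ?P2"
      proof
        show "?\<Phi> ` ?D \<subseteq> ?P2" using X_in(1)[OF finE noloop gd] by auto
        show "?P2 \<subseteq> ?\<Phi> ` ?D"
        proof
          fix X assume "X \<in> ?P2"
          then obtain S where S: "S \<in> ?P1" "latb_rank ends S \<le> CARD('d)" "?\<Phi> S = X"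
            using X_surj[OF finE noloop gd] by blast
          then show "X \<in> ?\<Phi> ` ?D" by (metis (mono_tags, lifting) image_eqI mem_Collect_eq)
        qed
      qed
    qed
    have rk: "codim (?\<Phi> a) = latb_rank ends a" if "a \<in> ?D" for a
      using X_in(2)[OF finE noloop gd] that by blast
    have W: "whitney ?P1 (\<subseteq>) (latb_rank ends) i j = whitney ?P2 revincl codim i j"
      if "i \<le> CARD('d)" "j \<le> CARD('d)" for i j
      by (rule whitney_iso[OF fin1 porder_sub fin2 porder_rev refl down0 bij ord0 rk that])
    have c1: "arr_char_poly E ends g Q = (\<Sum>j\<le>CARD('d). monom (whitney ?P1 (\<subseteq>) (latb_rank ends) 0 j) (CARD('d) - j))"
      unfolding arr_char_poly_def char_poly_of_def by (intro sum.cong refl) (simp add: W)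
    have c2: "poly_part_div (CARD('v) - CARD('d)) (gg_char_poly E ends g)
        = (\<Sum>j\<le>CARD('d). monom (whitney ?P1 (\<subseteq>) (latb_rank ends) 0 j) (CARD('d) - j))"
      unfolding poly_part_div_def gg_char_poly_def char_poly_of_def by (rule shift_sum_monom[OF dn])
    have w1: "arr_whitney_poly E ends g Q = (\<Sum>j\<le>CARD('d). monom (\<Sum>i\<le>j. monom (whitney ?P1 (\<subseteq>) (latb_rank ends) i j) i) (CARD('d) - j))"
      unfolding arr_whitney_poly_def whitney_poly_of_alt
      by (intro sum.cong refl) (simp add: W)
    have w2: "poly_part_div (CARD('v) - CARD('d)) (gg_whitney_poly E ends g)
        = (\<Sum>j\<le>CARD('d). monom (\<Sum>i\<le>j. monom (whitney ?P1 (\<subseteq>) (latb_rank ends) i j) i) (CARD('d) - j))"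
      unfolding poly_part_div_def gg_whitney_poly_def whitney_poly_of_alt by (rule shift_sum_monom[OF dn])
    show ?thesis using c1 c2 w1 w2 by simp
  qed
  show ?thesis using od main by blast
qed


end
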